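(* Let $\Gamma$ be a finitely generated discrete group with finite symmetric generating set $Q$, let $Z\subseteq \mathrm{Sub}(\Gamma)$ be a uniformly recurrent subgroup of $\Gamma$, and let $H\in Z$. Then the groupoid $\mathcal{G}_H$ (defined in the context), equipped with its operations and topology, is an ample, minimal, Hausdorff, étale topological groupoid whose unit space $\mathcal{G}_H^0$ is homeomorphic to $Z$ (with the subspace topology from $\mathrm{Sub}(\Gamma)$).
   Context: Word length $l(\gamma)$ is taken with respect to $Q$. $\mathrm{Sub}(\Gamma)$ is the space of subgroups of $\Gamma$ with the topology of pointwise convergence of indicator functions, with $\Gamma$ acting by conjugation $\gamma.H=\gamma H\gamma^{-1}$. A uniformly recurrent subgroup (URS) is a nonempty closed $\Gamma$-invariant subset $Z\subseteq\mathrm{Sub}(\Gamma)$ on which every $\Gamma$-orbit is dense. For $H\le\Gamma$, the Schreier graph $S(H)=S_\Gamma^Q(H)$ is the rooted labeled graph with vertex set $\Gamma/H$, root $H$, and for each $\gamma H\in\Gamma/H$ and $q\in Q$ an edge from $\gamma H$ to $q\gamma H$ labeled $q$; $d$ is the shortest-path metric and $B_n(S,p)$ the ball of radius $n$ around a vertex $p$. Two rooted labeled balls are root-label isomorphic if there is a graph isomorphism between them preserving roots and labels (such an isomorphism is unique). Construction of $\mathcal{G}_H$: write $S=S(H)$. For $p\in\Gamma/H$ and $n\ge 0$ let $[p]_n$ be the root-label isomorphism class of the rooted labeled ball $(B_n(S,p),p)$, and let $E_n=\{[p]_n: p\in\Gamma/H\}$ (a finite discrete set), with maps $E_{n+1}\to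 E_n$, $[p]_{n+1}\mapsto[p]_n$. Let $\mathcal{G}_H^0=\varprojlim E_n$. For $x=(x_n)\in\mathcal{G}_H^0$ choose vertices $p_n\in\Gamma/H$ with $x_n=[p_n]_n$. The arrows of $\mathcal{G}_H$ are equivalence classes of pairs $(x,\gamma)$ with $x\in\mathcal{G}_H^0$, $\gamma\in\Gamma$, where $(x,\gamma)\sim(x,\gamma')$ iff $\gamma p_n=\gamma' p_n$ for all sufficiently large $n$ (this does not depend on the choices of $p_n$). Range $r(x,\gamma)=x$; source $s(x,\gamma)=\gamma.x$, where $(\gamma.x)_n=[\gamma p_{n+l(\gamma)}]_n$; product $(x,\gamma')(\gamma'.x,\gamma)=(x,\gamma\gamma')$; inverse $(x,\gamma)^{-1}=(\gamma.x,\gamma^{-1})$; units are $(x,e)$, identified with $x\in\mathcal{G}_H^0$. The topology on $\mathcal{G}_H$ is generated by the sets $U_{c,\gamma}=\{(x,\gamma): x_N=c\}$ for $N\in\mathbb{N}$, $c\in E_N$, $\gamma\in\Gamma$ with $l(\gamma)\le N$. Ample means étale with totally disconnected unit space; minimal means every orbit in the unit space is dense. *)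

theory Defs
  imports "HOL-Analysis.Analysis" "HOL-Algebra.Algebra"
begin

text \<open>A groupoid is given by its set of arrows A, its set of units U (a subset of A),
  range and source maps r s, a partial multiplication m (defined on pairs (a,b) with
  s a = r b, meaning a is followed by b on the left: r (m a b) = r a) and inversion i.\<close>

definition is_groupoid ::
  "'a set \<Rightarrow> 'a set \<Rightarrow> ('a \<Rightarrow> 'a) \<Rightarrow> ('a \<Rightarrow> 'a) \<Rightarrow> ('a \<Rightarrow> 'a \<Rightarrow> 'a) \<Rightarrow> ('a \<Rightarrow> 'a) \<Rightarrow> bool"
  where "is_groupoid A U r s m i \<longleftrightarrow>
     U \<subseteq> A \<and>
     (\<forall>a\<in>A. r a \<in> U \<and> s a \<in> U) \<and>
     (\<forall>u\<in>U. r u = u \<and> s u = u) \<and>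
     (\<forall>a\<in>A. \<forall>b\<in>A. s a = r b \<longrightarrow> m a b \<in> A \<and> r (m a b) = r a \<and> s (m a b) = s b) \<and>
     (\<forall>a\<in>A. \<forall>b\<in>A. \<forall>c\<in>A. s a = r b \<and> s b = r c \<longrightarrow> m (m a b) c = m a (m b c)) \<and>
     (\<forall>a\<in>A. m (r a) a = a \<and> m a (s a) = a) \<and>
     (\<forall>a\<in>A. i a \<in> A \<and> r (i a) = s a \<and> s (i a) = r a \<and> m a (i a) = r a \<and> m (i a) a = s a)"

definition composable_pairs :: "'a set \<Rightarrow> ('a \<Rightarrow> 'a) \<Rightarrow> ('a \<Rightarrow> 'a) \<Rightarrow> ('a \<times> 'a) set"
  where "composable_pairs A r s = {(a, b). a \<in> A \<and> b \<in> A \<and> s a = r b}"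

definition is_topological_groupoid ::
  "'a topology \<Rightarrow> 'a set \<Rightarrow> ('a \<Rightarrow> 'a) \<Rightarrow> ('a \<Rightarrow> 'a) \<Rightarrow> ('a \<Rightarrow> 'a \<Rightarrow> 'a) \<Rightarrow> ('a \<Rightarrow> 'a) \<Rightarrow> bool"
  where "is_topological_groupoid T U r s m i \<longleftrightarrow>
     is_groupoid (topspace T) U r s m i \<and>
     continuous_map (subtopology (prod_topology T T) (composable_pairs (topspace T) r s)) T
        (\<lambda>(a, b). m a b) \<and>
     continuous_map T T i"

definition is_etale :: "'a topology \<Rightarrow> ('a \<Rightarrow> 'a) \<Rightarrow> bool"
  where "is_etale T r \<longleftrightarrow>
     (\<forall>a\<in>topspace T. \<exists>V. openin T V \<and> a \<in> V \<and> openin T (r ` V) \<and>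
        homeomorphic_map (subtopology T V) (subtopology T (r ` V)) r)"

definition totally_disconnected_space :: "'a topology \<Rightarrow> bool"
  where "totally_disconnected_space TX \<longleftrightarrow>
     (\<forall>C. connectedin TX C \<longrightarrow> (\<forall>y\<in>C. \<forall>z\<in>C. y = z))"

definition is_ample :: "'a topology \<Rightarrow> 'a set \<Rightarrow> ('a \<Rightarrow> 'a) \<Rightarrow> bool"
  where "is_ample T U r \<longleftrightarrow> is_etale T r \<and> totally_disconnected_space (subtopology T U)"

definition is_minimal_groupoid ::
  "'a topology \<Rightarrow> 'a set \<Rightarrow> ('a \<Rightarrow> 'a) \<Rightarrow> ('a \<Rightarrow> 'a) \<Rightarrow> bool"
  where "is_minimal_groupoid T U r s \<longleftrightarrow>
     (\<forall>u\<in>U. (subtopology T U) closure_of {s a | a. a \<in> topspace T \<and> r a = u} = U)"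

definition word_prod :: "('g, 'b) monoid_scheme \<Rightarrow> 'g list \<Rightarrow> 'g"
  where "word_prod G ws = foldr (\<lambda>x y. x \<otimes>\<^bsub>G\<^esub> y) ws \<one>\<^bsub>G\<^esub>"

definition word_len :: "('g, 'b) monoid_scheme \<Rightarrow> 'g set \<Rightarrow> 'g \<Rightarrow> nat"
  where "word_len G Q g = (LEAST n. \<exists>ws. set ws \<subseteq> Q \<and> length ws = n \<and> word_prod G ws = g)"

definition Sub :: "('g, 'b) monoid_scheme \<Rightarrow> 'g set set"
  where "Sub G = {H. subgroup H G}"

text \<open>Topology of pointwise convergence of indicator functions (product topology on
  the power set of Gamma), restricted to Sub(Gamma); subbasis: cylinder sets.\<close>
definition Sub_topology :: "('g, 'b) monoid_scheme \<Rightarrow> 'g set topology"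
  where "Sub_topology G = topology_generated_by
     ({{H \<in> Sub G. g \<in> H} | g. g \<in> carrier G} \<union> {{H \<in> Sub G. g \<notin> H} | g. g \<in> carrier G})"

definition conj_sub :: "('g, 'b) monoid_scheme \<Rightarrow> 'g \<Rightarrow> 'g set \<Rightarrow> 'g set"
  where "conj_sub G g H = (\<lambda>h. g \<otimes>\<^bsub>G\<^esub> h \<otimes>\<^bsub>G\<^esub> inv\<^bsub>G\<^esub> g) ` H"

definition is_URS :: "('g, 'b) monoid_scheme \<Rightarrow> 'g set set \<Rightarrow> bool"
  where "is_URS G Z \<longleftrightarrow>
     Z \<noteq> {} \<and> Z \<subseteq> Sub G \<and> closedin (Sub_topology G) Z \<and>
     (\<forall>g\<in>carrier G. \<forall>H\<in>Z. conj_sub G g H \<in> Z) \<and>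
     (\<forall>H\<in>Z. (Sub_topology G) closure_of {conj_sub G g H | g. g \<in> carrier G} = Z)"

text \<open>Vertices of S(H): the left cosets gH; the generator q acts by p \<mapsto> q p.
  The edges are p --q--> q p for q in Q.\<close>
definition schreier_vertices :: "('g, 'b) monoid_scheme \<Rightarrow> 'g set \<Rightarrow> 'g set set"
  where "schreier_vertices G H = {g <#\<^bsub>G\<^esub> H | g. g \<in> carrier G}"

definition sball :: "('g, 'b) monoid_scheme \<Rightarrow> 'g set \<Rightarrow> nat \<Rightarrow> 'g set \<Rightarrow> 'g set set"
  where "sball G Q n p = {word_prod G ws <#\<^bsub>G\<^esub> p | ws. set ws \<subseteq> Q \<and> length ws \<le> n}"

definition ball_iso :: "('g, 'b) monoid_scheme \<Rightarrow> 'g set \<Rightarrow> nat \<Rightarrow> 'g set \<Rightarrow> 'g set \<Rightarrow> bool"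
  where "ball_iso G Q n p p' \<longleftrightarrow>
     (\<exists>f. bij_betw f (sball G Q n p) (sball G Q n p') \<and> f p = p' \<and>
        (\<forall>u\<in>sball G Q n p. \<forall>v\<in>sball G Q n p. \<forall>q\<in>Q.
            (q <#\<^bsub>G\<^esub> u = v) \<longleftrightarrow> (q <#\<^bsub>G\<^esub> f u = f v)))"

text \<open>The class [p]_n, represented by the set of all vertices of S(H) whose n-ball
  is root-label isomorphic to that of p.\<close>
definition ball_class :: "('g, 'b) monoid_scheme \<Rightarrow> 'g set \<Rightarrow> 'g set \<Rightarrow> nat \<Rightarrow> 'g set \<Rightarrow> 'g set set"
  where "ball_class G Q H n p = {p' \<in> schreier_vertices G H. ball_iso G Q n p p'}"

definition E_set :: "('g, 'b) monoid_scheme \<Rightarrow> 'g set \<Rightarrow> 'g set \<Rightarrow> nat \<Rightarrow> 'g set set set"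
  where "E_set G Q H n = ball_class G Q H n ` schreier_vertices G H"

type_synonym 'g unit_pt = "nat \<Rightarrow> 'g set set"

text \<open>Unit space: the inverse limit of the E_n along [p]_{n+1} \<mapsto> [p]_n.\<close>
definition GH0 :: "('g, 'b) monoid_scheme \<Rightarrow> 'g set \<Rightarrow> 'g set \<Rightarrow> 'g unit_pt set"
  where "GH0 G Q H = {x. (\<forall>n. x n \<in> E_set G Q H n) \<and>
     (\<forall>n. \<exists>p\<in>schreier_vertices G H. x (Suc n) = ball_class G Q H (Suc n) p \<and>
                                       x n = ball_class G Q H n p)}"

definition pick :: "'g unit_pt \<Rightarrow> nat \<Rightarrow> 'g set"
  where "pick x n = (SOME p. p \<in> x n)"

definition arr_eq :: "('g, 'b) monoid_scheme \<Rightarrow> 'g unit_pt \<Rightarrow> 'g \<Rightarrow> 'g \<Rightarrow> bool"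
  where "arr_eq G x g g' \<longleftrightarrow> (\<exists>N. \<forall>n\<ge>N. g <#\<^bsub>G\<^esub> pick x n = g' <#\<^bsub>G\<^esub> pick x n)"

text \<open>The arrow [(x,g)], represented as x together with the equivalence class of g.\<close>
definition arr :: "('g, 'b) monoid_scheme \<Rightarrow> 'g unit_pt \<Rightarrow> 'g \<Rightarrow> 'g unit_pt \<times> 'g set"
  where "arr G x g = (x, {g' \<in> carrier G. arr_eq G x g g'})"

definition GH_arrows :: "('g, 'b) monoid_scheme \<Rightarrow> 'g set \<Rightarrow> 'g set \<Rightarrow> ('g unit_pt \<times> 'g set) set"
  where "GH_arrows G Q H = {arr G x g | x g. x \<in> GH0 G Q H \<and> g \<in> carrier G}"

definition GH_units :: "('g, 'b) monoid_scheme \<Rightarrow> 'g set \<Rightarrow> 'g set \<Rightarrow> ('g unit_pt \<times> 'g set) set"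
  where "GH_units G Q H = (\<lambda>x. arr G x \<one>\<^bsub>G\<^esub>) ` GH0 G Q H"

definition uact :: "('g, 'b) monoid_scheme \<Rightarrow> 'g set \<Rightarrow> 'g set \<Rightarrow> 'g \<Rightarrow> 'g unit_pt \<Rightarrow> 'g unit_pt"
  where "uact G Q H g x = (\<lambda>n. ball_class G Q H n (g <#\<^bsub>G\<^esub> pick x (n + word_len G Q g)))"

definition arr_rep :: "('g, 'b) monoid_scheme \<Rightarrow> 'g unit_pt \<times> 'g set \<Rightarrow> 'g"
  where "arr_rep G a = (SOME g. g \<in> carrier G \<and> g \<in> snd a)"

definition GH_r :: "('g, 'b) monoid_scheme \<Rightarrow> 'g unit_pt \<times> 'g set \<Rightarrow> 'g unit_pt \<times> 'g set"
  where "GH_r G a = arr G (fst a) \<one>\<^bsub>G\<^esub>"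

definition GH_s :: "('g, 'b) monoid_scheme \<Rightarrow> 'g set \<Rightarrow> 'g set \<Rightarrow>
    'g unit_pt \<times> 'g set \<Rightarrow> 'g unit_pt \<times> 'g set"
  where "GH_s G Q H a = arr G (uact G Q H (arr_rep G a) (fst a)) \<one>\<^bsub>G\<^esub>"

definition GH_mult :: "('g, 'b) monoid_scheme \<Rightarrow>
    'g unit_pt \<times> 'g set \<Rightarrow> 'g unit_pt \<times> 'g set \<Rightarrow> 'g unit_pt \<times> 'g set"
  where "GH_mult G a b = arr G (fst a) (arr_rep G b \<otimes>\<^bsub>G\<^esub> arr_rep G a)"

definition GH_inv :: "('g, 'b) monoid_scheme \<Rightarrow> 'g set \<Rightarrow> 'g set \<Rightarrow>
    'g unit_pt \<times> 'g set \<Rightarrow> 'g unit_pt \<times> 'g set"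
  where "GH_inv G Q H a = arr G (uact G Q H (arr_rep G a) (fst a)) (inv\<^bsub>G\<^esub> arr_rep G a)"

definition GH_basic :: "('g, 'b) monoid_scheme \<Rightarrow> 'g set \<Rightarrow> 'g set \<Rightarrow>
    nat \<Rightarrow> 'g set set \<Rightarrow> 'g \<Rightarrow> ('g unit_pt \<times> 'g set) set"
  where "GH_basic G Q H N c g = {arr G x g | x. x \<in> GH0 G Q H \<and> x N = c}"

definition GH_topology :: "('g, 'b) monoid_scheme \<Rightarrow> 'g set \<Rightarrow> 'g set \<Rightarrow>
    ('g unit_pt \<times> 'g set) topology"
  where "GH_topology G Q H = topology_generated_by
     {GH_basic G Q H N c g | N c g. c \<in> E_set G Q H N \<and> g \<in> carrier G \<and> word_len G Q g \<le> N}"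

end

theory Submission
  imports Defs
begin

locale GHL = group G for G :: "('g, 'b) monoid_scheme" (structure) +
  fixes Q :: "'g set" and Z :: "'g set set" and H :: "'g set"
  assumes Qfin: "finite Q" and QG: "Q \<subseteq> carrier G" and Qinv: "\<forall>q\<in>Q. inv q \<in> Q"
    and gen: "generate G Q = carrier G"
    and URS: "is_URS G Z" and HZ: "H \<in> Z"
begin

definition Bw :: "nat \<Rightarrow> 'g set" where
  "Bw n = {word_prod G ws | ws. set ws \<subseteq> Q \<and> length ws \<le> n}"

definition D :: "nat \<Rightarrow> 'g set" where "D n = Bw (2*n+1)"

lemma wp_Nil[simp]: "word_prod G [] = \<one>" by (simp add: word_prod_def)
lemma wp_Cons[simp]: "word_prod G (q#ws) = q \<otimes> word_prod G ws" by (simp add: word_prod_def)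

lemma wp_carrier: "set ws \<subseteq> Q \<Longrightarrow> word_prod G ws \<in> carrier G"
  using QG by (induction ws) auto

lemma wp_append: "set xs \<subseteq> Q \<Longrightarrow> set ys \<subseteq> Q \<Longrightarrow>
   word_prod G (xs @ ys) = word_prod G xs \<otimes> word_prod G ys"
  using QG by (induction xs) (auto simp: m_assoc wp_carrier)

lemma wp_inv: "set ws \<subseteq> Q \<Longrightarrow> inv (word_prod G ws) = word_prod G (rev (map (\<lambda>q. inv q) ws))
   \<and> set (rev (map (\<lambda>q. inv q) ws)) \<subseteq> Q"
proof (induction ws)
  case Nil then show ?case by simp
next
  case (Cons q ws)
  have q: "q \<in> carrier G" "q \<in> Q" using Cons QG by auto
  have "inv (word_prod G (q#ws)) = inv (word_prod G ws) \<otimes> inv q"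
    using q wp_carrier Cons by (simp add: inv_mult_group)
  also have "\<dots> = word_prod G (rev (map (\<lambda>q. inv q) ws)) \<otimes> word_prod G [inv q]"
    using Cons q by simp
  also have "\<dots> = word_prod G (rev (map (\<lambda>q. inv q) (q#ws)))"
    using Cons q Qinv by (simp add: wp_append)
  finally show ?case using Cons q Qinv by auto
qed

lemma Bw_carrier: "Bw n \<subseteq> carrier G"
  unfolding Bw_def using wp_carrier by auto

lemma D_carrier: "D n \<subseteq> carrier G"
  unfolding D_def by (rule Bw_carrier)

lemma Bw_mono: "m \<le> n \<Longrightarrow> Bw m \<subseteq> Bw n"
  unfolding Bw_def by fastforce

lemma D_mono: "m \<le> n \<Longrightarrow> D m \<subseteq> D n"
  unfolding D_def by (rule Bw_mono) simp

lemma Bw_one: "\<one> \<in> Bw n"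
  unfolding Bw_def by (rule CollectI, rule exI[of _ "[]"]) simp

lemma Bw_mult: "a \<in> Bw m \<Longrightarrow> b \<in> Bw n \<Longrightarrow> a \<otimes> b \<in> Bw (m + n)"
proof -
  assume "a \<in> Bw m" "b \<in> Bw n"
  then obtain xs ys where "a = word_prod G xs" "set xs \<subseteq> Q" "length xs \<le> m"
    "b = word_prod G ys" "set ys \<subseteq> Q" "length ys \<le> n" unfolding Bw_def by blast
  then show ?thesis unfolding Bw_def
    by (intro CollectI exI[of _ "xs @ ys"]) (auto simp: wp_append)
qed

lemma Bw_inv: "a \<in> Bw m \<Longrightarrow> inv a \<in> Bw m"
proof -
  assume "a \<in> Bw m"
  then obtain xs where "a = word_prod G xs" "set xs \<subseteq> Q" "length xs \<le> m"
    unfolding Bw_def by blast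
  then show ?thesis unfolding Bw_def using wp_inv[of xs]
    by (intro CollectI exI[of _ "rev (map (\<lambda>q. inv q) xs)"]) auto
qed

lemma Bw_finite: "finite (Bw n)"
proof -
  have "Bw n = word_prod G ` {ws. set ws \<subseteq> Q \<and> length ws \<le> n}"
    unfolding Bw_def by blast
  then show ?thesis using finite_lists_length_le[OF Qfin] by simp
qed

lemma D_finite: "finite (D n)" unfolding D_def by (rule Bw_finite)

lemma all_words: "g \<in> carrier G \<Longrightarrow> \<exists>ws. set ws \<subseteq> Q \<and> word_prod G ws = g"
proof -
  assume "g \<in> carrier G"
  then have "g \<in> generate G Q" using gen by simp
  then show ?thesis
  proof (induction rule: generate.induct)
    case one then show ?case by (intro exI[of _ "[]"]) simp
  next
    case (incl h) then show ?case using QG by (intro exI[of _ "[h]"]) auto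
  next
    case (inv h) then show ?case using QG Qinv by (intro exI[of _ "[inv h]"]) auto
  next
    case (eng h1 h2)
    then obtain xs ys where "set xs \<subseteq> Q" "word_prod G xs = h1" "set ys \<subseteq> Q" "word_prod G ys = h2"
      by blast
    then show ?case by (intro exI[of _ "xs @ ys"]) (auto simp: wp_append)
  qed
qed

lemma word_len_Bw: "g \<in> carrier G \<Longrightarrow> g \<in> Bw (word_len G Q g)"
proof -
  assume "g \<in> carrier G"
  then obtain ws where ws: "set ws \<subseteq> Q" "word_prod G ws = g" using all_words by blast
  have "\<exists>ws. set ws \<subseteq> Q \<and> length ws = word_len G Q g \<and> word_prod G ws = g"
    unfolding word_len_def by (rule LeastI[of _ "length ws"]) (use ws in blast)
  then show ?thesis unfolding Bw_def by auto
qed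

lemma word_len_one: "word_len G Q \<one> = 0"
  unfolding word_len_def by (rule Least_eq_0) (rule exI[of _ "[]"], simp)

lemma in_some_D: "g \<in> carrier G \<Longrightarrow> g \<in> D (word_len G Q g)"
  using word_len_Bw D_def Bw_mono by (metis le_add2 mult_2 subset_iff trans_le_add1)

lemma finite_in_D: "finite F \<Longrightarrow> F \<subseteq> carrier G \<Longrightarrow> \<exists>n. F \<subseteq> D n"
proof (induction F rule: finite_induct)
  case empty then show ?case by simp
next
  case (insert f F)
  then obtain n where n: "F \<subseteq> D n" by auto
  have "f \<in> D (word_len G Q f)" using insert in_some_D by auto
  then show ?case using n D_mono
    by (intro exI[of _ "max n (word_len G Q f)"]) (meson insert_subset max.cobounded1 max.cobounded2 subsetD subset_trans)
qed


section \<open>Cosets, stabilisers, traces\<close>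

lemma Z_Sub: "Z \<subseteq> Sub G" using URS unfolding is_URS_def by blast

lemma H_sub: "subgroup H G" using HZ Z_Sub unfolding Sub_def by blast

abbreviation V where "V \<equiv> schreier_vertices G H"

lemma V_carrier: "p \<in> V \<Longrightarrow> p \<subseteq> carrier G"
  unfolding schreier_vertices_def using H_sub l_coset_subset_G subgroup.subset by blast

lemma V_act: "p \<in> V \<Longrightarrow> g \<in> carrier G \<Longrightarrow> g <# p \<in> V"
proof -
  assume "p \<in> V" "g \<in> carrier G"
  then obtain k where k: "k \<in> carrier G" "p = k <# H" unfolding schreier_vertices_def by blast
  have "g <# p = (g \<otimes> k) <# H" using k \<open>g \<in> carrier G\<close> H_sub subgroup.subset lcos_m_assoc by metis
  then show ?thesis unfolding schreier_vertices_def using k \<open>g \<in> carrier G\<close> by blast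
qed

lemma act_assoc: "p \<subseteq> carrier G \<Longrightarrow> g \<in> carrier G \<Longrightarrow> h \<in> carrier G \<Longrightarrow> g <# (h <# p) = (g \<otimes> h) <# p"
  by (rule lcos_m_assoc)

lemma act_one: "p \<subseteq> carrier G \<Longrightarrow> \<one> <# p = p" by (rule lcos_mult_one)

lemma act_carrier: "p \<subseteq> carrier G \<Longrightarrow> g \<in> carrier G \<Longrightarrow> g <# p \<subseteq> carrier G"
  by (rule l_coset_subset_G)

lemma act_eq: assumes "p \<subseteq> carrier G" "u \<in> carrier G" "v \<in> carrier G"
  shows "(inv v \<otimes> u) <# p = p \<longleftrightarrow> u <# p = v <# p"
proof
  assume "(inv v \<otimes> u) <# p = p"
  then have "v <# ((inv v \<otimes> u) <# p) = v <# p" by simp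
  then show "u <# p = v <# p" using assms by (simp add: act_assoc m_assoc[symmetric])
next
  assume "u <# p = v <# p"
  then have "inv v <# (u <# p) = inv v <# (v <# p)" by simp
  then show "(inv v \<otimes> u) <# p = p" using assms by (simp add: act_assoc act_one)
qed

lemma act_inj: assumes "p \<subseteq> carrier G" "q \<subseteq> carrier G" "g \<in> carrier G"
  shows "g <# p = g <# q \<longleftrightarrow> p = q"
proof
  assume "g <# p = g <# q"
  then have "inv g <# (g <# p) = inv g <# (g <# q)" by simp
  then show "p = q" using assms by (simp add: act_assoc act_one)
qed simp

lemma coset_eq: assumes "subgroup S G" "a \<in> carrier G" "b \<in> carrier G"
  shows "a <# S = b <# S \<longleftrightarrow> inv a \<otimes> b \<in> S"
proof
  assume e: "a <# S = b <# S"
  have "b \<in> b <# S" unfolding l_coset_def using assms subgroup.one_closed[OF assms(1)]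
    by force
  then obtain s where s: "s \<in> S" "b = a \<otimes> s" using e unfolding l_coset_def by auto
  then have "inv a \<otimes> b = s" using assms subgroup.mem_carrier[OF assms(1)]
    by (simp add: m_assoc[symmetric])
  then show "inv a \<otimes> b \<in> S" using s by simp
next
  assume "inv a \<otimes> b \<in> S"
  then have "b \<in> a <# S" using subgroup.lcos_module_rev[OF assms(1)] assms is_group by blast
  then show "a <# S = b <# S" using l_repr_independence assms by blast
qed

lemma coset_self: "subgroup S G \<Longrightarrow> a \<in> carrier G \<Longrightarrow> a <# S = S \<longleftrightarrow> a \<in> S"
proof -
  assume S: "subgroup S G" and a: "a \<in> carrier G"
  have "a <# S = \<one> <# S \<longleftrightarrow> inv a \<otimes> \<one> \<in> S" using coset_eq[OF S a] by simp
  also have "\<dots> \<longleftrightarrow> inv a \<in> S" using a by simp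
  also have "\<dots> \<longleftrightarrow> a \<in> S" using S a by (metis inv_inv subgroup.m_inv_closed)
  finally show ?thesis using lcos_mult_one[of S] subgroup.subset[OF S] by simp
qed

definition stab :: "'g set \<Rightarrow> 'g set" where "stab p = {h \<in> carrier G. h <# p = p}"

lemma stab_subgroup: assumes "p \<subseteq> carrier G" shows "subgroup (stab p) G"
proof (rule subgroupI)
  show "stab p \<subseteq> carrier G" unfolding stab_def by auto
  show "stab p \<noteq> {}" unfolding stab_def using assms act_one by auto
  fix a b assume a: "a \<in> stab p" and b: "b \<in> stab p"
  then show "inv a \<in> stab p" unfolding stab_def using assms
    by (metis (mono_tags, lifting) act_eq inv_closed l_inv mem_Collect_eq one_closed r_one)
  show "a \<otimes> b \<in> stab p" using a b assms unfolding stab_def by (auto simp: act_assoc[symmetric])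
qed

lemma conj_mem: assumes "K \<subseteq> carrier G" "g \<in> carrier G"
  shows "h \<in> conj_sub G g K \<longleftrightarrow> h \<in> carrier G \<and> inv g \<otimes> h \<otimes> g \<in> K"
proof
  assume "h \<in> conj_sub G g K"
  then obtain k where k: "k \<in> K" "h = g \<otimes> k \<otimes> inv g" unfolding conj_sub_def by auto
  then have kc: "k \<in> carrier G" using assms by auto
  have "inv g \<otimes> h \<otimes> g = k" using k kc assms by (simp add: m_assoc) (simp add: m_assoc[symmetric])
  then show "h \<in> carrier G \<and> inv g \<otimes> h \<otimes> g \<in> K" using k kc assms by auto
next
  assume h: "h \<in> carrier G \<and> inv g \<otimes> h \<otimes> g \<in> K"
  have "h = g \<otimes> (inv g \<otimes> h \<otimes> g) \<otimes> inv g" using h assms by (simp add: m_assoc) (simp add: m_assoc[symmetric])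
  then show "h \<in> conj_sub G g K" unfolding conj_sub_def using h by blast
qed

lemma stab_lcos: assumes "g \<in> carrier G" shows "stab (g <# H) = conj_sub G g H"
proof -
  have Hc: "H \<subseteq> carrier G" using H_sub subgroup.subset by blast
  { fix h assume h: "h \<in> carrier G"
    have "h <# (g <# H) = g <# H \<longleftrightarrow> (inv g \<otimes> (h \<otimes> g)) <# H = H"
      using act_eq[of H "h \<otimes> g" g] h assms Hc by (simp add: act_assoc)
    also have "\<dots> \<longleftrightarrow> inv g \<otimes> h \<otimes> g \<in> H" using coset_self[OF H_sub] h assms by (simp add: m_assoc)
    finally have "h <# (g <# H) = g <# H \<longleftrightarrow> inv g \<otimes> h \<otimes> g \<in> H" . }
  then show ?thesis unfolding stab_def using conj_mem[OF Hc assms] by auto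
qed

definition tr :: "nat \<Rightarrow> 'g set \<Rightarrow> 'g set" where "tr n p = stab p \<inter> D n"

definition Wd :: "nat \<Rightarrow> 'g list set" where "Wd n = {ws. set ws \<subseteq> Q \<and> length ws \<le> n}"

lemma sball_eq: "sball G Q n p = (\<lambda>ws. word_prod G ws <# p) ` Wd n"
  unfolding sball_def Wd_def by blast

lemma D_decomp: assumes "h \<in> D n"
  shows "\<exists>a b. a \<in> Wd (Suc n) \<and> b \<in> Wd n \<and> h = inv (word_prod G b) \<otimes> word_prod G a"
proof -
  obtain w where w: "h = word_prod G w" "set w \<subseteq> Q" "length w \<le> 2*n+1"
    using assms unfolding D_def Bw_def by blast
  define w1 where "w1 = take n w"
  define w2 where "w2 = drop n w"
  define b where "b = rev (map (\<lambda>q. inv q) w1)"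
  have w1: "set w1 \<subseteq> Q" "length w1 \<le> n" using w unfolding w1_def by (auto dest: in_set_takeD)
  have w2: "set w2 \<subseteq> Q" "length w2 \<le> Suc n" using w unfolding w2_def by (auto dest: in_set_dropD)
  have b: "inv (word_prod G w1) = word_prod G b" "set b \<subseteq> Q" using wp_inv[OF w1(1)] b_def by auto
  have "inv (word_prod G b) = word_prod G w1" using b(1)[symmetric] wp_carrier[OF w1(1)] by simp
  moreover have "h = word_prod G w1 \<otimes> word_prod G w2"
    using w wp_append[OF w1(1) w2(1)] unfolding w1_def w2_def by simp
  moreover have "length b \<le> n" using w1 b_def by simp
  ultimately show ?thesis using w1 w2 b unfolding Wd_def
    by (intro exI[of _ w2, OF exI[of _ b]]) auto
qed

lemma Wd_D: assumes "a \<in> Wd (Suc n)" "b \<in> Wd n"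
  shows "inv (word_prod G b) \<otimes> word_prod G a \<in> D n"
proof -
  have "word_prod G a \<in> Bw (Suc n)" "word_prod G b \<in> Bw n" using assms unfolding Wd_def Bw_def by auto
  then have "inv (word_prod G b) \<otimes> word_prod G a \<in> Bw (n + Suc n)" using Bw_mult Bw_inv by blast
  then show ?thesis unfolding D_def by (simp add: mult_2)
qed

lemma Wd_carrier: "a \<in> Wd n \<Longrightarrow> word_prod G a \<in> carrier G"
  unfolding Wd_def using wp_carrier by auto

lemma tr_iff_words: assumes "p \<subseteq> carrier G" "p' \<subseteq> carrier G"
  shows "tr n p = tr n p' \<longleftrightarrow> (\<forall>a\<in>Wd (Suc n). \<forall>b\<in>Wd n.
     word_prod G a <# p = word_prod G b <# p \<longleftrightarrow> word_prod G a <# p' = word_prod G b <# p')"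
proof
  assume t: "tr n p = tr n p'"
  show "\<forall>a\<in>Wd (Suc n). \<forall>b\<in>Wd n.
     word_prod G a <# p = word_prod G b <# p \<longleftrightarrow> word_prod G a <# p' = word_prod G b <# p'"
  proof (intro ballI)
    fix a b assume ab: "a \<in> Wd (Suc n)" "b \<in> Wd n"
    define h where "h = inv (word_prod G b) \<otimes> word_prod G a"
    have hD: "h \<in> D n" using Wd_D[OF ab] h_def by simp
    have hc: "h \<in> carrier G" using hD D_carrier by auto
    have "h \<in> tr n p \<longleftrightarrow> h \<in> tr n p'" using t by simp
    then have "h <# p = p \<longleftrightarrow> h <# p' = p'" using hD hc unfolding tr_def stab_def by auto
    then show "word_prod G a <# p = word_prod G b <# p \<longleftrightarrow> word_prod G a <# p' = word_prod G b <# p'"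
      using act_eq[OF assms(1) Wd_carrier[OF ab(1)] Wd_carrier[OF ab(2)]]
        act_eq[OF assms(2) Wd_carrier[OF ab(1)] Wd_carrier[OF ab(2)]] by (simp add: h_def)
  qed
next
  assume w: "\<forall>a\<in>Wd (Suc n). \<forall>b\<in>Wd n.
     word_prod G a <# p = word_prod G b <# p \<longleftrightarrow> word_prod G a <# p' = word_prod G b <# p'"
  show "tr n p = tr n p'"
  proof -
    { fix h assume hD: "h \<in> D n"
      then obtain a b where ab: "a \<in> Wd (Suc n)" "b \<in> Wd n" "h = inv (word_prod G b) \<otimes> word_prod G a"
        using D_decomp by blast
      have "word_prod G a <# p = word_prod G b <# p \<longleftrightarrow> word_prod G a <# p' = word_prod G b <# p'"
        using w ab(1,2) by blast
      then have "h <# p = p \<longleftrightarrow> h <# p' = p'"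
        using act_eq[OF assms(1) Wd_carrier[OF ab(1)] Wd_carrier[OF ab(2)]]
        act_eq[OF assms(2) Wd_carrier[OF ab(1)] Wd_carrier[OF ab(2)]] by (simp add: ab(3)) }
    then show ?thesis unfolding tr_def stab_def by auto
  qed
qed

lemma Wd_mono: "a \<in> Wd n \<Longrightarrow> a \<in> Wd (Suc n)" unfolding Wd_def by auto

lemma transport: assumes "p \<subseteq> carrier G" "p' \<subseteq> carrier G"
  and f: "\<forall>u\<in>sball G Q n p. \<forall>v\<in>sball G Q n p. \<forall>q\<in>Q. (q <# u = v) \<longleftrightarrow> (q <# f u = f v)"
  and fp: "f p = p'"
  shows "ws \<in> Wd n \<Longrightarrow> f (word_prod G ws <# p) = word_prod G ws <# p'"
proof (induction ws)
  case Nil then show ?case using fp assms by (simp add: act_one)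
next
  case (Cons q ws)
  have ws: "ws \<in> Wd n" using Cons.prems unfolding Wd_def by auto
  have q: "q \<in> Q" "q \<in> carrier G" using Cons.prems QG unfolding Wd_def by auto
  have u: "word_prod G ws <# p \<in> sball G Q n p" using ws sball_eq by blast
  have v: "word_prod G (q#ws) <# p \<in> sball G Q n p" using Cons.prems sball_eq by blast
  have e: "q <# (word_prod G ws <# p) = word_prod G (q#ws) <# p"
    using assms q Wd_carrier[OF ws] by (simp add: act_assoc)
  have "q <# f (word_prod G ws <# p) = f (word_prod G (q#ws) <# p)" using f u v q e by blast
  then show ?case using Cons.IH[OF ws] assms q Wd_carrier[OF ws] by (simp add: act_assoc)
qed

lemma ball_iso_tr: assumes pc: "p \<subseteq> carrier G" and pc': "p' \<subseteq> carrier G"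
  shows "ball_iso G Q n p p' \<longleftrightarrow> tr n p = tr n p'"
proof
  assume "ball_iso G Q n p p'"
  then obtain f where bij: "bij_betw f (sball G Q n p) (sball G Q n p')" and fp: "f p = p'"
    and f: "\<forall>u\<in>sball G Q n p. \<forall>v\<in>sball G Q n p. \<forall>q\<in>Q. (q <# u = v) \<longleftrightarrow> (q <# f u = f v)"
    unfolding ball_iso_def by blast
  have tp: "\<And>ws. ws \<in> Wd n \<Longrightarrow> f (word_prod G ws <# p) = word_prod G ws <# p'"
    using transport[OF pc pc' f fp] by blast
  have inj: "inj_on f (sball G Q n p)" using bij bij_betw_def by blast
  show "tr n p = tr n p'"
    unfolding tr_iff_words[OF pc pc']
  proof (intro ballI)
    fix a b assume a: "a \<in> Wd (Suc n)" and b: "b \<in> Wd n"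
    have vb: "word_prod G b <# p \<in> sball G Q n p" using b sball_eq by blast
    show "word_prod G a <# p = word_prod G b <# p \<longleftrightarrow> word_prod G a <# p' = word_prod G b <# p'"
    proof (cases a)
      case Nil
      have "[] \<in> Wd n" unfolding Wd_def by simp
      then have "word_prod G [] <# p \<in> sball G Q n p" using sball_eq[of n p] by blast
      then have p0: "p \<in> sball G Q n p" using pc act_one by simp
      have "p = word_prod G b <# p \<longleftrightarrow> f p = f (word_prod G b <# p)"
        using inj_on_eq_iff[OF inj p0 vb] by simp
      then show ?thesis using Nil tp[OF b] fp pc pc' by (simp add: act_one)
    next
      case (Cons q a')
      have a': "a' \<in> Wd n" "q \<in> Q" using a Cons unfolding Wd_def by auto
      have qc: "q \<in> carrier G" using a' QG by auto
      have ua: "word_prod G a' <# p \<in> sball G Q n p" using a' sball_eq by blast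
      have "word_prod G a <# p = q <# (word_prod G a' <# p)"
           "word_prod G a <# p' = q <# (word_prod G a' <# p')"
        using Cons pc pc' qc Wd_carrier[OF a'(1)] by (simp_all add: act_assoc)
      moreover have "q <# (word_prod G a' <# p) = word_prod G b <# p \<longleftrightarrow>
          q <# f (word_prod G a' <# p) = f (word_prod G b <# p)" using f ua vb a'(2) by blast
      ultimately show ?thesis using tp[OF a'(1)] tp[OF b] by simp
    qed
  qed
next
  assume t: "tr n p = tr n p'"
  have w: "\<forall>a\<in>Wd (Suc n). \<forall>b\<in>Wd n.
     word_prod G a <# p = word_prod G b <# p \<longleftrightarrow> word_prod G a <# p' = word_prod G b <# p'"
    using t tr_iff_words[OF pc pc'] by blast
  have w': "\<And>a b. a \<in> Wd n \<Longrightarrow> b \<in> Wd n \<Longrightarrow>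
     word_prod G a <# p = word_prod G b <# p \<longleftrightarrow> word_prod G a <# p' = word_prod G b <# p'"
    using w Wd_mono by blast
  define ch where "ch u = (SOME ws. ws \<in> Wd n \<and> u = word_prod G ws <# p)" for u
  define f where "f u = word_prod G (ch u) <# p'" for u
  have fws: "f (word_prod G ws <# p) = word_prod G ws <# p'" if ws: "ws \<in> Wd n" for ws
  proof -
    have "ch (word_prod G ws <# p) \<in> Wd n \<and> word_prod G ws <# p = word_prod G (ch (word_prod G ws <# p)) <# p"
      unfolding ch_def by (rule someI[of _ ws]) (use ws in simp)
    then have "word_prod G (ch (word_prod G ws <# p)) <# p' = word_prod G ws <# p'"
      using w'[of "ch (word_prod G ws <# p)" ws] ws by simp
    then show ?thesis unfolding f_def .
  qed
  have "[] \<in> Wd n" unfolding Wd_def by simp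
  then have fp: "f p = p'" using fws[of "[]"] pc pc' by (simp add: act_one)
  have bij: "bij_betw f (sball G Q n p) (sball G Q n p')"
  proof (rule bij_betw_imageI)
    show "inj_on f (sball G Q n p)"
    proof (rule inj_onI)
      fix u v assume u: "u \<in> sball G Q n p" and v: "v \<in> sball G Q n p" and e: "f u = f v"
      obtain a where a: "a \<in> Wd n" "u = word_prod G a <# p" using u sball_eq by auto
      obtain b where b: "b \<in> Wd n" "v = word_prod G b <# p" using v sball_eq by auto
      have "word_prod G a <# p' = word_prod G b <# p'" using e a b fws by simp
      then show "u = v" using w'[OF a(1) b(1)] a b by simp
    qed
    show "f ` sball G Q n p = sball G Q n p'"
      unfolding sball_eq using fws by (auto simp: image_iff)
  qed
  have edges: "\<forall>u\<in>sball G Q n p. \<forall>v\<in>sball G Q n p. \<forall>q\<in>Q. (q <# u = v) \<longleftrightarrow> (q <# f u = f v)"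
  proof (intro ballI)
    fix u v q assume u: "u \<in> sball G Q n p" and v: "v \<in> sball G Q n p" and q: "q \<in> Q"
    obtain a where a: "a \<in> Wd n" "u = word_prod G a <# p" using u sball_eq by auto
    obtain b where b: "b \<in> Wd n" "v = word_prod G b <# p" using v sball_eq by auto
    have qa: "q # a \<in> Wd (Suc n)" using a q unfolding Wd_def by auto
    have qc: "q \<in> carrier G" using q QG by auto
    have "q <# u = word_prod G (q#a) <# p" "q <# f u = word_prod G (q#a) <# p'"
      using a fws pc pc' qc Wd_carrier[OF a(1)] by (simp_all add: act_assoc)
    moreover have "word_prod G (q#a) <# p = word_prod G b <# p \<longleftrightarrow> word_prod G (q#a) <# p' = word_prod G b <# p'"
      using w qa b(1) by blast
    ultimately show "(q <# u = v) \<longleftrightarrow> (q <# f u = f v)" using b fws by simp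
  qed
  show "ball_iso G Q n p p'" unfolding ball_iso_def using bij fp edges by blast
qed

lemma ball_class_eq: "p \<in> V \<Longrightarrow> ball_class G Q H n p = {p' \<in> V. tr n p' = tr n p}"
  unfolding ball_class_def using ball_iso_tr V_carrier by auto


section \<open>Units\<close>

abbreviation U0 where "U0 \<equiv> GH0 G Q H"

lemma tr_refl_class: "p \<in> V \<Longrightarrow> p \<in> ball_class G Q H n p"
  using ball_class_eq by auto

lemma tr_Suc: "tr n p = tr (Suc n) p \<inter> D n"
  unfolding tr_def using D_mono[of n "Suc n"] by auto

lemma tr_le: "n \<le> m \<Longrightarrow> tr n p = tr m p \<inter> D n"
  unfolding tr_def using D_mono[of n m] by auto

lemma E_form: "c \<in> E_set G Q H n \<Longrightarrow> \<exists>p\<in>V. c = {p' \<in> V. tr n p' = tr n p}"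
  unfolding E_set_def using ball_class_eq by auto

lemma pick_in: assumes "x \<in> U0" shows "pick x n \<in> x n" "pick x n \<in> V"
proof -
  have "x n \<in> E_set G Q H n" using assms unfolding GH0_def by blast
  then obtain p where p: "p \<in> V" "x n = {p' \<in> V. tr n p' = tr n p}" using E_form by blast
  then have "p \<in> x n" by simp
  then show "pick x n \<in> x n" unfolding pick_def by (rule someI)
  then show "pick x n \<in> V" using p by auto
qed

definition T :: "'g unit_pt \<Rightarrow> nat \<Rightarrow> 'g set" where "T x n = tr n (pick x n)"

lemma x_eq: assumes "x \<in> U0" shows "x n = {p \<in> V. tr n p = T x n}"
proof -
  have "x n \<in> E_set G Q H n" using assms unfolding GH0_def by blast
  then obtain p where p: "p \<in> V" "x n = {p' \<in> V. tr n p' = tr n p}" using E_form by blast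
  then have "tr n (pick x n) = tr n p" using pick_in[OF assms, of n] by auto
  then show ?thesis using p unfolding T_def by simp
qed

lemma T_step: assumes "x \<in> U0" shows "T x n = T x (Suc n) \<inter> D n"
proof -
  obtain p where p: "p \<in> V" "x (Suc n) = ball_class G Q H (Suc n) p" "x n = ball_class G Q H n p"
    using assms unfolding GH0_def by blast
  have "pick x (Suc n) \<in> ball_class G Q H (Suc n) p" using pick_in(1)[OF assms, of "Suc n"] p(2) by simp
  then have 1: "tr (Suc n) (pick x (Suc n)) = tr (Suc n) p" unfolding ball_class_eq[OF p(1)] by simp
  have "pick x n \<in> ball_class G Q H n p" using pick_in(1)[OF assms, of n] p(3) by simp
  then have 2: "tr n (pick x n) = tr n p" unfolding ball_class_eq[OF p(1)] by simp
  show ?thesis unfolding T_def 1 2 by (rule tr_Suc)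
qed

lemma T_D: "T x n \<subseteq> D n" unfolding T_def tr_def by auto

lemma T_le: assumes "x \<in> U0" "n \<le> m" shows "T x n = T x m \<inter> D n"
  using assms(2)
proof (induction m rule: dec_induct)
  case base then show ?case using T_D by auto
next
  case (step m)
  have "T x m = T x (Suc m) \<inter> D m" by (rule T_step[OF assms(1)])
  moreover have "D n \<subseteq> D m" using D_mono step by simp
  ultimately show ?case using step.IH by blast
qed

definition Kx :: "'g unit_pt \<Rightarrow> 'g set" where "Kx x = (\<Union>n. T x n)"

lemma Kx_D: assumes "x \<in> U0" shows "Kx x \<inter> D n = T x n"
proof
  show "T x n \<subseteq> Kx x \<inter> D n" unfolding Kx_def using T_D by auto
  show "Kx x \<inter> D n \<subseteq> T x n"
  proof
    fix h assume h: "h \<in> Kx x \<inter> D n"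
    then obtain m where m: "h \<in> T x m" unfolding Kx_def by auto
    show "h \<in> T x n"
    proof (cases "m \<le> n")
      case True then show ?thesis using T_le[OF assms True] m T_D by auto
    next
      case False then show ?thesis using T_le[OF assms, of n m] m h by auto
    qed
  qed
qed

lemma Kx_carrier: "Kx x \<subseteq> carrier G"
  unfolding Kx_def using T_D D_carrier by blast

lemma Kx_mem: assumes "x \<in> U0" "h \<in> D n"
  shows "h \<in> Kx x \<longleftrightarrow> h <# pick x n = pick x n"
proof -
  have "h \<in> Kx x \<longleftrightarrow> h \<in> T x n" using Kx_D[OF assms(1), of n] assms(2) by auto
  then show ?thesis unfolding T_def tr_def stab_def using assms(2) D_carrier by auto
qed

lemma common_D: "a \<in> carrier G \<Longrightarrow> b \<in> carrier G \<Longrightarrow> \<exists>n. a \<in> D n \<and> b \<in> D n"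
proof -
  assume a: "a \<in> carrier G" and b: "b \<in> carrier G"
  define n where "n = max (word_len G Q a) (word_len G Q b)"
  have "a \<in> D n" using in_some_D[OF a] D_mono[of "word_len G Q a" n] n_def by auto
  moreover have "b \<in> D n" using in_some_D[OF b] D_mono[of "word_len G Q b" n] n_def by auto
  ultimately show ?thesis by blast
qed

lemma Kx_sub: assumes "x \<in> U0" shows "subgroup (Kx x) G"
proof (rule subgroupI)
  show "Kx x \<subseteq> carrier G" by (rule Kx_carrier)
  have "\<one> \<in> D 0" unfolding D_def using Bw_one by simp
  moreover have "\<one> <# pick x 0 = pick x 0" using V_carrier[OF pick_in(2)[OF assms]] by (rule act_one)
  ultimately have "\<one> \<in> Kx x" using Kx_mem[OF assms, of \<one> 0] by simp
  then show "Kx x \<noteq> {}" by auto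
next
  fix a b assume a: "a \<in> Kx x" and b: "b \<in> Kx x"
  have ac: "a \<in> carrier G" and bc: "b \<in> carrier G" using a b Kx_carrier by auto
  obtain n where n: "a \<in> D n" "a \<otimes> b \<in> D n" using common_D[of a "a \<otimes> b"] ac bc by auto
  define m where "m = max n (word_len G Q b)"
  have m: "b \<in> D m" "m \<ge> n" using in_some_D[OF bc] D_mono[of "word_len G Q b" m] m_def by auto
  have abm: "a \<in> D m" "a \<otimes> b \<in> D m" using n m D_mono by auto
  have pc: "pick x m \<subseteq> carrier G" using pick_in[OF assms] V_carrier by auto
  have "a \<in> stab (pick x m)" using Kx_mem[OF assms abm(1)] a ac unfolding stab_def by simp
  moreover have "b \<in> stab (pick x m)" using Kx_mem[OF assms m(1)] b bc unfolding stab_def by simp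
  ultimately have "a \<otimes> b \<in> stab (pick x m)" by (rule subgroup.m_closed[OF stab_subgroup[OF pc]])
  then show "a \<otimes> b \<in> Kx x" using Kx_mem[OF assms abm(2)] unfolding stab_def by simp
  obtain k where k: "a \<in> D k" using in_some_D ac by blast
  have "inv a \<in> D k" using k Bw_inv unfolding D_def by auto
  have pc: "pick x k \<subseteq> carrier G" using pick_in[OF assms] V_carrier by auto
  have "a \<in> stab (pick x k)" using Kx_mem[OF assms k] a ac unfolding stab_def by simp
  then have "inv a \<in> stab (pick x k)" by (rule subgroup.m_inv_closed[OF stab_subgroup[OF pc]])
  then show "inv a \<in> Kx x" using Kx_mem[OF assms \<open>inv a \<in> D k\<close>] unfolding stab_def by simp
qed

definition unit_of :: "'g set \<Rightarrow> 'g unit_pt" where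
  "unit_of S = (\<lambda>n. {p \<in> V. tr n p = S \<inter> D n})"

lemma x_unit: assumes "x \<in> U0" shows "x = unit_of (Kx x)"
proof
  fix n show "x n = unit_of (Kx x) n" unfolding unit_of_def using x_eq[OF assms] Kx_D[OF assms] by simp
qed

lemma GH0_eq: assumes "x \<in> U0" "y \<in> U0" shows "x = y \<longleftrightarrow> Kx x = Kx y"
proof
  assume e: "Kx x = Kx y"
  have "x = unit_of (Kx x)" by (rule x_unit[OF assms(1)])
  also have "\<dots> = unit_of (Kx y)" using e by simp
  also have "\<dots> = y" by (rule x_unit[OF assms(2), symmetric])
  finally show "x = y" .
qed simp

lemma x_eq2: assumes "x \<in> U0" shows "x n = {p \<in> V. tr n p = Kx x \<inter> D n}"
  using x_eq[OF assms] Kx_D[OF assms] by simp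

lemma GH0_eqn: assumes "x \<in> U0" "y \<in> U0" shows "x n = y n \<longleftrightarrow> Kx x \<inter> D n = Kx y \<inter> D n"
proof
  assume e: "x n = y n"
  have "pick x n \<in> y n" using e pick_in(1)[OF assms(1), of n] by simp
  then have "tr n (pick x n) = Kx y \<inter> D n" using x_eq2[OF assms(2)] by auto
  moreover have "tr n (pick x n) = Kx x \<inter> D n" using Kx_D[OF assms(1)] unfolding T_def by simp
  ultimately show "Kx x \<inter> D n = Kx y \<inter> D n" by simp
next
  assume "Kx x \<inter> D n = Kx y \<inter> D n"
  then show "x n = y n" using x_eq2[OF assms(1)] x_eq2[OF assms(2)] by simp
qed

lemma GH0_down: assumes "x \<in> U0" "y \<in> U0" "x m = y m" "n \<le> m" shows "x n = y n"
proof -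
  have "Kx x \<inter> D m = Kx y \<inter> D m" using GH0_eqn assms by blast
  then have "Kx x \<inter> D n = Kx y \<inter> D n" using D_mono[OF assms(4)] by blast
  then show ?thesis using GH0_eqn assms by blast
qed

lemma GH0_loc: assumes "x \<in> U0" "y \<in> U0" "x m = y m" "h \<in> D m" shows "h \<in> Kx x \<longleftrightarrow> h \<in> Kx y"
  using GH0_eqn[OF assms(1,2)] assms(3,4) by blast

definition realizable :: "'g set \<Rightarrow> bool" where
  "realizable S \<longleftrightarrow> (\<forall>n. \<exists>p\<in>V. tr n p = S \<inter> D n)"

lemma unit_of_GH0: assumes "S \<subseteq> carrier G" "realizable S"
  shows "unit_of S \<in> U0" "Kx (unit_of S) = S"
proof -
  have cls: "ball_class G Q H n p = unit_of S n" if "p \<in> V" "tr n p = S \<inter> D n" for n p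
    using ball_class_eq[OF that(1)] that(2) unfolding unit_of_def by simp
  show u: "unit_of S \<in> U0"
    unfolding GH0_def
  proof (intro CollectI conjI allI)
    fix n
    obtain p where p: "p \<in> V" "tr n p = S \<inter> D n" using assms(2) realizable_def by blast
    show "unit_of S n \<in> E_set G Q H n" unfolding E_set_def using cls[OF p] p(1) by blast
    obtain p where p: "p \<in> V" "tr (Suc n) p = S \<inter> D (Suc n)" using assms(2) realizable_def by blast
    have "tr n p = S \<inter> D n" using tr_Suc[of n p] p D_mono[of n "Suc n"] by auto
    then show "\<exists>p\<in>V. unit_of S (Suc n) = ball_class G Q H (Suc n) p \<and> unit_of S n = ball_class G Q H n p"
      using cls[OF p(1) p(2)] cls[OF p(1) \<open>tr n p = S \<inter> D n\<close>] p(1) by auto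
  qed
  have "T (unit_of S) n = S \<inter> D n" for n
    using pick_in(1)[OF u, of n] unfolding T_def unit_of_def by simp
  then have "Kx (unit_of S) = (\<Union>n. S \<inter> D n)" unfolding Kx_def by simp
  also have "\<dots> = S" using assms(1) in_some_D by blast
  finally show "Kx (unit_of S) = S" .
qed

lemma arr_eq_Kx: assumes "x \<in> U0" "g \<in> carrier G" "g' \<in> carrier G"
  shows "arr_eq G x g g' \<longleftrightarrow> inv g \<otimes> g' \<in> Kx x"
proof -
  define h where "h = inv g \<otimes> g'"
  have hc: "h \<in> carrier G" using assms h_def by simp
  obtain N where N: "h \<in> D N" using in_some_D hc by blast
  have eq: "g <# pick x n = g' <# pick x n \<longleftrightarrow> h \<in> Kx x" if "n \<ge> N" for n
  proof -
    have hn: "h \<in> D n" using N D_mono that by auto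
    have pc: "pick x n \<subseteq> carrier G" using pick_in[OF assms(1)] V_carrier by auto
    have "g' <# pick x n = g <# pick x n \<longleftrightarrow> h <# pick x n = pick x n"
      using act_eq[OF pc assms(3) assms(2)] h_def by simp
    then show ?thesis using Kx_mem[OF assms(1) hn] by auto
  qed
  show ?thesis unfolding arr_eq_def h_def[symmetric]
  proof
    assume "\<exists>N. \<forall>n\<ge>N. g <# pick x n = g' <# pick x n"
    then obtain M where "\<forall>n\<ge>M. g <# pick x n = g' <# pick x n" by blast
    then show "h \<in> Kx x" using eq[of "max M N"] by simp
  next
    assume "h \<in> Kx x" then show "\<exists>N. \<forall>n\<ge>N. g <# pick x n = g' <# pick x n" using eq by blast
  qed
qed

lemma conj_carrier: "K \<subseteq> carrier G \<Longrightarrow> g \<in> carrier G \<Longrightarrow> conj_sub G g K \<subseteq> carrier G"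
  using conj_mem by blast

lemma uact_eq: assumes x: "x \<in> U0" and g: "g \<in> carrier G"
  shows "uact G Q H g x = unit_of (conj_sub G g (Kx x))" "realizable (conj_sub G g (Kx x))"
proof -
  define l where "l = word_len G Q g"
  have gl: "g \<in> Bw l" "inv g \<in> Bw l" using word_len_Bw[OF g] Bw_inv l_def by auto
  have key: "tr n (g <# pick x (n + l)) = conj_sub G g (Kx x) \<inter> D n" for n
  proof -
    define p where "p = pick x (n + l)"
    have pc: "p \<subseteq> carrier G" using pick_in[OF x] V_carrier p_def by auto
    { fix h assume hD: "h \<in> D n"
      have hc: "h \<in> carrier G" using hD D_carrier by auto
      have "inv g \<otimes> h \<otimes> g \<in> Bw (l + (2*n+1) + l)"
        using Bw_mult[OF Bw_mult[OF gl(2) hD[unfolded D_def]] gl(1)] .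
      moreover have "l + (2*n+1) + l = 2*(n+l)+1" by simp
      ultimately have hD': "inv g \<otimes> h \<otimes> g \<in> D (n + l)" unfolding D_def by (simp add: add.commute)
      have "h <# (g <# p) = g <# p \<longleftrightarrow> (inv g \<otimes> (h \<otimes> g)) <# p = p"
        using act_eq[OF pc, of "h \<otimes> g" g] hc g pc by (simp add: act_assoc)
      also have "\<dots> \<longleftrightarrow> inv g \<otimes> h \<otimes> g \<in> Kx x"
        using Kx_mem[OF x hD'] p_def hc g by (simp add: m_assoc)
      also have "\<dots> \<longleftrightarrow> h \<in> conj_sub G g (Kx x)" using conj_mem[OF Kx_carrier g] hc by simp
      finally have "h <# (g <# p) = g <# p \<longleftrightarrow> h \<in> conj_sub G g (Kx x)" . }
    then show ?thesis unfolding tr_def stab_def p_def using D_carrier by auto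
  qed
  show "uact G Q H g x = unit_of (conj_sub G g (Kx x))"
  proof
    fix n
    have pv: "g <# pick x (n + l) \<in> V" using V_act pick_in[OF x] g by auto
    show "uact G Q H g x n = unit_of (conj_sub G g (Kx x)) n"
      unfolding uact_def l_def[symmetric] ball_class_eq[OF pv] unit_of_def key by simp
  qed
  show "realizable (conj_sub G g (Kx x))" unfolding realizable_def
    using key V_act pick_in[OF x] g by blast
qed

lemma uact_GH0: assumes "x \<in> U0" "g \<in> carrier G" shows "uact G Q H g x \<in> U0"
proof -
  have "conj_sub G g (Kx x) \<subseteq> carrier G" using conj_carrier[OF Kx_carrier assms(2)] .
  then show ?thesis using unit_of_GH0(1)[OF _ uact_eq(2)[OF assms]] uact_eq(1)[OF assms] by simp
qed

lemma Kx_uact: assumes "x \<in> U0" "g \<in> carrier G" shows "Kx (uact G Q H g x) = conj_sub G g (Kx x)"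
proof -
  have "conj_sub G g (Kx x) \<subseteq> carrier G" using conj_carrier[OF Kx_carrier assms(2)] .
  then show ?thesis using unit_of_GH0(2)[OF _ uact_eq(2)[OF assms]] uact_eq(1)[OF assms] by simp
qed

lemma conj_mult: assumes "K \<subseteq> carrier G" "g \<in> carrier G" "h \<in> carrier G"
  shows "conj_sub G (g \<otimes> h) K = conj_sub G g (conj_sub G h K)"
proof -
  have c: "conj_sub G h K \<subseteq> carrier G" using conj_carrier assms by blast
  { fix y assume y: "y \<in> carrier G"
    have "inv (g \<otimes> h) \<otimes> y \<otimes> (g \<otimes> h) = inv h \<otimes> (inv g \<otimes> y \<otimes> g) \<otimes> h"
      using assms y by (simp add: inv_mult_group m_assoc)
    then have "y \<in> conj_sub G (g \<otimes> h) K \<longleftrightarrow> y \<in> conj_sub G g (conj_sub G h K)"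
      using conj_mem[OF assms(1)] conj_mem[OF c] y assms by simp }
  moreover have "conj_sub G (g \<otimes> h) K \<subseteq> carrier G" "conj_sub G g (conj_sub G h K) \<subseteq> carrier G"
    using conj_carrier assms c by auto
  ultimately show ?thesis by blast
qed

lemma conj_in: assumes "subgroup K G" "k \<in> K" shows "conj_sub G k K = K"
proof -
  have Kc: "K \<subseteq> carrier G" "k \<in> carrier G" using assms subgroup.subset by auto
  { fix y assume y: "y \<in> carrier G"
    have "inv k \<otimes> y \<otimes> k \<in> K \<longleftrightarrow> y \<in> K"
    proof
      assume "inv k \<otimes> y \<otimes> k \<in> K"
      then have "k \<otimes> (inv k \<otimes> y \<otimes> k) \<otimes> inv k \<in> K"
        using subgroup.m_closed[OF assms(1)] subgroup.m_inv_closed[OF assms(1)] assms(2) by blast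
      moreover have "k \<otimes> (inv k \<otimes> y \<otimes> k) \<otimes> inv k = y" using Kc y
        by (simp add: m_assoc) (simp add: m_assoc[symmetric])
      ultimately show "y \<in> K" by simp
    next
      assume "y \<in> K" then show "inv k \<otimes> y \<otimes> k \<in> K"
        using subgroup.m_closed[OF assms(1)] subgroup.m_inv_closed[OF assms(1)] assms(2) by blast
    qed }
  then show ?thesis using conj_mem[OF Kc] Kc by blast
qed

lemma conj_one: "K \<subseteq> carrier G \<Longrightarrow> conj_sub G \<one> K = K"
  using conj_mem[of K \<one>] by auto

lemma conj_inv: "K \<subseteq> carrier G \<Longrightarrow> g \<in> carrier G \<Longrightarrow> conj_sub G (inv g) (conj_sub G g K) = K"
  using conj_mult[of K "inv g" g] conj_one by simp


section \<open>Arrows\<close>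

abbreviation A where "A \<equiv> GH_arrows G Q H"

lemma cancel_l: "x \<in> carrier G \<Longrightarrow> y \<in> carrier G \<Longrightarrow> x \<otimes> (inv x \<otimes> y) = y"
  by (simp add: m_assoc[symmetric])
lemma cancel_l2: "x \<in> carrier G \<Longrightarrow> y \<in> carrier G \<Longrightarrow> inv x \<otimes> (x \<otimes> y) = y"
  by (simp add: m_assoc[symmetric])

lemma lcos_set: assumes "subgroup K G" "g \<in> carrier G"
  shows "{g'' \<in> carrier G. inv g \<otimes> g'' \<in> K} = g <# K"
proof -
  have "g'' \<in> g <# K \<longleftrightarrow> inv g \<otimes> g'' \<in> K" if g'': "g'' \<in> carrier G" for g''
  proof
    assume "g'' \<in> g <# K"
    then obtain k where k: "k \<in> K" "g'' = g \<otimes> k" unfolding l_coset_def by auto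
    then show "inv g \<otimes> g'' \<in> K" using assms subgroup.mem_carrier[OF assms(1)] cancel_l2 by simp
  next
    assume "inv g \<otimes> g'' \<in> K" then show "g'' \<in> g <# K"
      using subgroup.lcos_module_rev[OF assms(1) is_group assms(2) g''] by simp
  qed
  moreover have "g <# K \<subseteq> carrier G" using l_coset_subset_G assms subgroup.subset by blast
  ultimately show ?thesis by blast
qed

lemma inv_swap: assumes "subgroup K G" "a \<in> carrier G" "b \<in> carrier G"
  shows "inv a \<otimes> b \<in> K \<longleftrightarrow> inv b \<otimes> a \<in> K"
proof -
  have "inv (inv a \<otimes> b) = inv b \<otimes> a" "inv (inv b \<otimes> a) = inv a \<otimes> b"
    using assms by (simp_all add: inv_mult_group)
  then show ?thesis using subgroup.m_inv_closed[OF assms(1)] assms by (metis inv_closed m_closed)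
qed

lemma arr_def2: assumes x: "x \<in> U0" and g: "g \<in> carrier G" shows "arr G x g = (x, g <# Kx x)"
proof -
  have "{g'' \<in> carrier G. arr_eq G x g g''} = {g'' \<in> carrier G. inv g \<otimes> g'' \<in> Kx x}"
    using arr_eq_Kx[OF x g] by blast
  also have "\<dots> = g <# Kx x" by (rule lcos_set[OF Kx_sub[OF x] g])
  finally show ?thesis unfolding arr_def by simp
qed

lemma fst_arr[simp]: "fst (arr G x g) = x" unfolding arr_def by simp

lemma arr_eq_iff: assumes "x \<in> U0" "y \<in> U0" "g \<in> carrier G" "g' \<in> carrier G"
  shows "arr G x g = arr G y g' \<longleftrightarrow> x = y \<and> inv g \<otimes> g' \<in> Kx x"
proof -
  have "arr G x g = arr G y g' \<longleftrightarrow> x = y \<and> g <# Kx x = g' <# Kx y"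
    unfolding arr_def2[OF assms(1,3)] arr_def2[OF assms(2,4)] by simp
  also have "\<dots> \<longleftrightarrow> x = y \<and> inv g \<otimes> g' \<in> Kx x"
    using coset_eq[OF Kx_sub[OF assms(1)] assms(3,4)] by blast
  finally show ?thesis .
qed

lemma arr_same: assumes "x \<in> U0" "g \<in> carrier G" "g' \<in> carrier G" "inv g \<otimes> g' \<in> Kx x"
  shows "arr G x g' = arr G x g"
  using arr_eq_iff[OF assms(1,1,2,3)] assms(4) by simp

lemma rep_arr: assumes "x \<in> U0" "g \<in> carrier G"
  shows "arr_rep G (arr G x g) \<in> carrier G" "inv g \<otimes> arr_rep G (arr G x g) \<in> Kx x"
proof -
  have sK: "snd (arr G x g) = g <# Kx x" using arr_def2 assms by simp
  have "inv g \<otimes> g \<in> Kx x" using assms(2) subgroup.one_closed[OF Kx_sub[OF assms(1)]] by simp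
  then have "g \<in> g <# Kx x" using lcos_set[OF Kx_sub[OF assms(1)] assms(2)] assms(2) by blast
  then have "g \<in> carrier G \<and> g \<in> snd (arr G x g)" using sK assms(2) by simp
  then have "arr_rep G (arr G x g) \<in> carrier G \<and> arr_rep G (arr G x g) \<in> snd (arr G x g)"
    unfolding arr_rep_def by (rule someI[of _ g])
  then have "arr_rep G (arr G x g) \<in> {g'' \<in> carrier G. inv g \<otimes> g'' \<in> Kx x}"
    unfolding sK lcos_set[OF Kx_sub[OF assms(1)] assms(2)] by simp
  then show "arr_rep G (arr G x g) \<in> carrier G" "inv g \<otimes> arr_rep G (arr G x g) \<in> Kx x"
    by simp_all
qed

lemma arr_rep_same: assumes "x \<in> U0" "g \<in> carrier G"
  shows "arr G x (arr_rep G (arr G x g)) = arr G x g"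
  using arr_same[OF assms rep_arr[OF assms]] .

lemma A_elim: "a \<in> A \<Longrightarrow> \<exists>x g. x \<in> U0 \<and> g \<in> carrier G \<and> a = arr G x g"
  unfolding GH_arrows_def by blast

lemma arr_in_A: "x \<in> U0 \<Longrightarrow> g \<in> carrier G \<Longrightarrow> arr G x g \<in> A"
  unfolding GH_arrows_def by blast

lemma basic_mem: assumes "y \<in> U0" "g' \<in> carrier G" "g \<in> carrier G"
  shows "arr G y g' \<in> GH_basic G Q H N c g \<longleftrightarrow> y N = c \<and> inv g \<otimes> g' \<in> Kx y"
proof
  assume "arr G y g' \<in> GH_basic G Q H N c g"
  then obtain x where x: "x \<in> U0" "x N = c" "arr G y g' = arr G x g" unfolding GH_basic_def by blast
  have "y = x \<and> inv g' \<otimes> g \<in> Kx y" using arr_eq_iff[OF assms(1) x(1) assms(2,3)] x(3) by blast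
  then have "y = x" "inv g' \<otimes> g \<in> Kx y" by blast+
  then show "y N = c \<and> inv g \<otimes> g' \<in> Kx y"
    using x(2) inv_swap[OF Kx_sub[OF assms(1)] assms(3,2)] by simp
next
  assume "y N = c \<and> inv g \<otimes> g' \<in> Kx y"
  then have "arr G y g' = arr G y g" "y N = c" using arr_same[OF assms(1,3,2)] by simp_all
  then show "arr G y g' \<in> GH_basic G Q H N c g" unfolding GH_basic_def
    using assms(1) by blast
qed

lemma uact_rep: assumes "x \<in> U0" "g \<in> carrier G" "g' \<in> carrier G" "inv g \<otimes> g' \<in> Kx x"
  shows "uact G Q H g' x = uact G Q H g x"
proof -
  have "g' = g \<otimes> (inv g \<otimes> g')" using assms cancel_l by simp
  then have "conj_sub G g' (Kx x) = conj_sub G g (conj_sub G (inv g \<otimes> g') (Kx x))"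
    using conj_mult[OF Kx_carrier assms(2)] assms by (metis inv_closed m_closed)
  also have "\<dots> = conj_sub G g (Kx x)" using conj_in[OF Kx_sub[OF assms(1)] assms(4)] by simp
  finally show ?thesis using GH0_eq uact_GH0 Kx_uact assms by simp
qed

lemma uact_one: "x \<in> U0 \<Longrightarrow> uact G Q H \<one> x = x"
  using GH0_eq uact_GH0 Kx_uact conj_one Kx_carrier by simp

lemma uact_mult: assumes "x \<in> U0" "g \<in> carrier G" "h \<in> carrier G"
  shows "uact G Q H (g \<otimes> h) x = uact G Q H g (uact G Q H h x)"
  using GH0_eq uact_GH0 Kx_uact assms conj_mult Kx_carrier by simp

lemma uact_inv: assumes "x \<in> U0" "g \<in> carrier G"
  shows "uact G Q H (inv g) (uact G Q H g x) = x"
  using uact_mult[of x "inv g" g] assms uact_one by (simp add: uact_mult[symmetric])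

lemma r_arr: "GH_r G (arr G x g) = arr G x \<one>" unfolding GH_r_def by simp

lemma s_arr: assumes "x \<in> U0" "g \<in> carrier G"
  shows "GH_s G Q H (arr G x g) = arr G (uact G Q H g x) \<one>"
  unfolding GH_s_def using uact_rep[OF assms rep_arr[OF assms]] by simp

lemma mult_arr: assumes x: "x \<in> U0" and g1: "g1 \<in> carrier G" and g2: "g2 \<in> carrier G"
  shows "GH_mult G (arr G x g1) (arr G (uact G Q H g1 x) g2) = arr G x (g2 \<otimes> g1)"
proof -
  define y where "y = uact G Q H g1 x"
  have y: "y \<in> U0" using uact_GH0 x g1 y_def by simp
  define r1 where "r1 = arr_rep G (arr G x g1)"
  define r2 where "r2 = arr_rep G (arr G y g2)"
  have r1: "r1 \<in> carrier G" "inv g1 \<otimes> r1 \<in> Kx x" using rep_arr[OF x g1] r1_def by auto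
  have r2: "r2 \<in> carrier G" "inv g2 \<otimes> r2 \<in> Kx y" using rep_arr[OF y g2] r2_def by auto
  have k2: "inv g1 \<otimes> (inv g2 \<otimes> r2) \<otimes> g1 \<in> Kx x"
    using r2 Kx_uact[OF x g1] y_def conj_mem[OF Kx_carrier g1] by auto
  have eq: "inv (g2 \<otimes> g1) \<otimes> (r2 \<otimes> r1) = (inv g1 \<otimes> (inv g2 \<otimes> r2) \<otimes> g1) \<otimes> (inv g1 \<otimes> r1)"
    using g1 g2 r1 r2 by (simp add: inv_mult_group m_assoc cancel_l)
  have "inv (g2 \<otimes> g1) \<otimes> (r2 \<otimes> r1) \<in> Kx x"
    unfolding eq using k2 r1 subgroup.m_closed[OF Kx_sub[OF x]] by blast
  then have "arr G x (r2 \<otimes> r1) = arr G x (g2 \<otimes> g1)"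
    using arr_same[OF x _ _] g1 g2 r1 r2 by simp
  then show ?thesis unfolding GH_mult_def r1_def r2_def y_def by simp
qed

lemma inv_arr: assumes x: "x \<in> U0" and g: "g \<in> carrier G"
  shows "GH_inv G Q H (arr G x g) = arr G (uact G Q H g x) (inv g)"
proof -
  define r where "r = arr_rep G (arr G x g)"
  have r: "r \<in> carrier G" "inv g \<otimes> r \<in> Kx x" using rep_arr[OF x g] r_def by auto
  have u: "uact G Q H r x = uact G Q H g x" using uact_rep[OF x g r(1) r(2)] .
  have "inv r \<otimes> g \<in> Kx x" using inv_swap[OF Kx_sub[OF x] g r(1)] r by simp
  moreover have "inv g \<otimes> (inv (inv g) \<otimes> inv r) \<otimes> g = inv r \<otimes> g"
    using g r by (simp add: m_assoc cancel_l2)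
  ultimately have "inv (inv g) \<otimes> inv r \<in> Kx (uact G Q H g x)"
    using Kx_uact[OF x g] conj_mem[OF Kx_carrier g] g r by simp
  then have "arr G (uact G Q H g x) (inv r) = arr G (uact G Q H g x) (inv g)"
    using arr_same[OF uact_GH0[OF x g]] g r by simp
  then show ?thesis unfolding GH_inv_def r_def[symmetric] using u by simp
qed

lemma composable: assumes "x \<in> U0" "g \<in> carrier G" "y \<in> U0" "h \<in> carrier G"
  shows "GH_s G Q H (arr G x g) = GH_r G (arr G y h) \<longleftrightarrow> y = uact G Q H g x"
  unfolding s_arr[OF assms(1,2)] r_arr
  using arr_eq_iff[OF uact_GH0[OF assms(1,2)] assms(3) one_closed one_closed] by auto


section \<open>Groupoid axioms\<close>

abbreviation UU where "UU \<equiv> GH_units G Q H"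

lemma UU_eq: "UU = (\<lambda>x. arr G x \<one>) ` U0" unfolding GH_units_def by simp

lemma groupoid: "is_groupoid A UU (GH_r G) (GH_s G Q H) (GH_mult G) (GH_inv G Q H)"
  unfolding is_groupoid_def
proof (intro conjI ballI impI)
  show "UU \<subseteq> A" unfolding UU_eq using arr_in_A by auto
next
  fix a assume "a \<in> A"
  then obtain x g where xg: "x \<in> U0" "g \<in> carrier G" "a = arr G x g" using A_elim by blast
  show "GH_r G a \<in> UU" unfolding xg r_arr UU_eq using xg by blast
  show "GH_s G Q H a \<in> UU" unfolding xg s_arr[OF xg(1,2)] UU_eq using uact_GH0[OF xg(1,2)] by blast
  show "GH_mult G (GH_r G a) a = a"
    unfolding xg r_arr using mult_arr[OF xg(1) one_closed xg(2)] uact_one[OF xg(1)] xg by simp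
  show "GH_mult G a (GH_s G Q H a) = a"
    unfolding xg s_arr[OF xg(1,2)] using mult_arr[OF xg(1) xg(2) one_closed] xg by simp
  have y: "uact G Q H g x \<in> U0" using uact_GH0[OF xg(1,2)] .
  show "GH_inv G Q H a \<in> A" unfolding xg inv_arr[OF xg(1,2)] using arr_in_A[OF y] xg by simp
  show "GH_r G (GH_inv G Q H a) = GH_s G Q H a"
    unfolding xg inv_arr[OF xg(1,2)] r_arr s_arr[OF xg(1,2)] ..
  show "GH_s G Q H (GH_inv G Q H a) = GH_r G a"
    unfolding xg inv_arr[OF xg(1,2)] r_arr s_arr[OF y inv_closed[OF xg(2)]] uact_inv[OF xg(1,2)] ..
  show "GH_mult G a (GH_inv G Q H a) = GH_r G a"
    unfolding xg inv_arr[OF xg(1,2)] r_arr using mult_arr[OF xg(1,2) inv_closed[OF xg(2)]] xg by simp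
  have "GH_mult G (arr G (uact G Q H g x) (inv g)) (arr G (uact G Q H (inv g) (uact G Q H g x)) g)
        = arr G (uact G Q H g x) (g \<otimes> inv g)"
    by (rule mult_arr[OF y inv_closed[OF xg(2)] xg(2)])
  then show "GH_mult G (GH_inv G Q H a) a = GH_s G Q H a"
    unfolding xg inv_arr[OF xg(1,2)] s_arr[OF xg(1,2)] using uact_inv[OF xg(1,2)] xg by simp
next
  fix u assume "u \<in> UU"
  then obtain x where x: "x \<in> U0" "u = arr G x \<one>" unfolding UU_eq by blast
  show "GH_r G u = u" unfolding x r_arr ..
  show "GH_s G Q H u = u" unfolding x s_arr[OF x(1) one_closed] uact_one[OF x(1)] ..
next
  fix a b assume a: "a \<in> A" and b: "b \<in> A" and c: "GH_s G Q H a = GH_r G b"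
  obtain x g where xg: "x \<in> U0" "g \<in> carrier G" "a = arr G x g" using A_elim a by blast
  obtain y h where yh: "y \<in> U0" "h \<in> carrier G" "b = arr G y h" using A_elim b by blast
  have y: "y = uact G Q H g x" using composable[OF xg(1,2) yh(1,2)] c xg yh by simp
  have m: "GH_mult G a b = arr G x (h \<otimes> g)" unfolding xg yh y by (rule mult_arr[OF xg(1,2) yh(2)])
  show "GH_mult G a b \<in> A" unfolding m using arr_in_A[OF xg(1)] xg yh by simp
  show "GH_r G (GH_mult G a b) = GH_r G a" by (simp only: m, simp only: xg r_arr)
  show "GH_s G Q H (GH_mult G a b) = GH_s G Q H b"
    by (simp only: m, simp only: xg yh y s_arr[OF xg(1) m_closed[OF yh(2) xg(2)]] s_arr[OF uact_GH0[OF xg(1,2)] yh(2)] uact_mult[OF xg(1) yh(2) xg(2)])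
next
  fix a b c assume a: "a \<in> A" and b: "b \<in> A" and c: "c \<in> A"
    and cc: "GH_s G Q H a = GH_r G b \<and> GH_s G Q H b = GH_r G c"
  obtain x g1 where xg: "x \<in> U0" "g1 \<in> carrier G" "a = arr G x g1" using A_elim a by blast
  obtain y g2 where yh: "y \<in> U0" "g2 \<in> carrier G" "b = arr G y g2" using A_elim b by blast
  obtain z g3 where zh: "z \<in> U0" "g3 \<in> carrier G" "c = arr G z g3" using A_elim c by blast
  have y: "y = uact G Q H g1 x" using composable[OF xg(1,2) yh(1,2)] cc xg yh by simp
  have z: "z = uact G Q H g2 y" using composable[OF yh(1,2) zh(1,2)] cc zh yh by simp
  have z': "z = uact G Q H (g2 \<otimes> g1) x" using z y uact_mult xg yh by simp
  have mab: "GH_mult G a b = arr G x (g2 \<otimes> g1)" unfolding xg yh y by (rule mult_arr[OF xg(1,2) yh(2)])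
  have mbc: "GH_mult G b c = arr G y (g3 \<otimes> g2)" unfolding zh yh z by (rule mult_arr[OF yh(1,2) zh(2)])
  have "GH_mult G (GH_mult G a b) c = arr G x (g3 \<otimes> (g2 \<otimes> g1))"
    unfolding mab zh z' using mult_arr[OF xg(1) m_closed[OF yh(2) xg(2)] zh(2)] .
  moreover have "GH_mult G a (GH_mult G b c) = arr G x ((g3 \<otimes> g2) \<otimes> g1)"
    unfolding mbc xg y using mult_arr[OF xg(1,2) m_closed[OF zh(2) yh(2)]] .
  ultimately show "GH_mult G (GH_mult G a b) c = GH_mult G a (GH_mult G b c)"
    using xg yh zh by (simp add: m_assoc)
qed


section \<open>Topology basics\<close>

abbreviation TT where "TT \<equiv> GH_topology G Q H"

definition SB where "SB = {GH_basic G Q H N c g | N c g. c \<in> E_set G Q H N \<and> g \<in> carrier G \<and> word_len G Q g \<le> N}"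

lemma TT_eq: "TT = topology_generated_by SB" unfolding GH_topology_def SB_def by simp

lemma basic_elems: "b \<in> GH_basic G Q H N c g \<Longrightarrow> \<exists>y. y \<in> U0 \<and> y N = c \<and> b = arr G y g"
  unfolding GH_basic_def by blast

lemma nbhd: assumes "x \<in> U0" "g \<in> carrier G" "word_len G Q g \<le> N"
  shows "openin TT (GH_basic G Q H N (x N) g)" "arr G x g \<in> GH_basic G Q H N (x N) g"
proof -
  have "x N \<in> E_set G Q H N" using assms(1) unfolding GH0_def by blast
  then have "GH_basic G Q H N (x N) g \<in> SB" unfolding SB_def using assms by blast
  then show "openin TT (GH_basic G Q H N (x N) g)" unfolding TT_eq by (rule topology_generated_by_Basis)
  show "arr G x g \<in> GH_basic G Q H N (x N) g" unfolding GH_basic_def using assms(1) by blast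
qed

lemma topspace_TT: "topspace TT = A"
proof -
  have "\<Union>SB \<subseteq> A"
  proof
    fix a assume "a \<in> \<Union>SB"
    then obtain N c g where "a \<in> GH_basic G Q H N c g" "g \<in> carrier G" unfolding SB_def by blast
    then show "a \<in> A" using basic_elems arr_in_A by blast
  qed
  moreover have "A \<subseteq> \<Union>SB"
  proof
    fix a assume "a \<in> A"
    then obtain x g where xg: "x \<in> U0" "g \<in> carrier G" "a = arr G x g" using A_elim by blast
    have "x (word_len G Q g) \<in> E_set G Q H (word_len G Q g)" using xg unfolding GH0_def by blast
    then have "GH_basic G Q H (word_len G Q g) (x (word_len G Q g)) g \<in> SB" unfolding SB_def using xg by blast
    then show "a \<in> \<Union>SB" using nbhd(2)[OF xg(1,2) order_refl] xg(3) by blast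
  qed
  ultimately show ?thesis unfolding TT_eq by simp
qed

lemma open_crit: assumes "W \<subseteq> A"
  and crit: "\<And>x g. x \<in> U0 \<Longrightarrow> g \<in> carrier G \<Longrightarrow> arr G x g \<in> W \<Longrightarrow>
              \<exists>M. \<forall>y\<in>U0. y M = x M \<longrightarrow> arr G y g \<in> W"
  shows "openin TT W"
  unfolding openin_subopen[of TT W]
proof
  fix a assume "a \<in> W"
  then obtain x g where xg: "x \<in> U0" "g \<in> carrier G" "a = arr G x g" using A_elim assms(1) by blast
  obtain M where M: "\<forall>y\<in>U0. y M = x M \<longrightarrow> arr G y g \<in> W" using crit xg \<open>a \<in> W\<close> by blast
  define N where "N = max M (word_len G Q g)"
  have "GH_basic G Q H N (x N) g \<subseteq> W"
  proof
    fix b assume "b \<in> GH_basic G Q H N (x N) g"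
    then obtain y where y: "y \<in> U0" "y N = x N" "b = arr G y g" using basic_elems by blast
    then have "y M = x M" using GH0_down[OF y(1) xg(1) y(2)] N_def by simp
    then show "b \<in> W" using M y by blast
  qed
  then show "\<exists>T. openin TT T \<and> a \<in> T \<and> T \<subseteq> W"
    using nbhd[OF xg(1,2), of N] N_def xg(3) by auto
qed

lemma gen_crit: assumes "generate_topology_on SB W"
  shows "\<forall>x g. x \<in> U0 \<longrightarrow> g \<in> carrier G \<longrightarrow> arr G x g \<in> W \<longrightarrow>
              (\<exists>M. \<forall>y\<in>U0. y M = x M \<longrightarrow> arr G y g \<in> W)"
  using assms
proof (induction rule: generate_topology_on.induct)
  case Empty then show ?case by simp
next
  case (Int a b)
  show ?case
  proof (intro allI impI)
    fix x g assume x: "x \<in> U0" and g: "g \<in> carrier G" and m: "arr G x g \<in> a \<inter> b"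
    obtain M1 where M1: "\<forall>y\<in>U0. y M1 = x M1 \<longrightarrow> arr G y g \<in> a" using Int.IH(1) x g m by blast
    obtain M2 where M2: "\<forall>y\<in>U0. y M2 = x M2 \<longrightarrow> arr G y g \<in> b" using Int.IH(2) x g m by blast
    show "\<exists>M. \<forall>y\<in>U0. y M = x M \<longrightarrow> arr G y g \<in> a \<inter> b"
    proof (intro exI[of _ "max M1 M2"] ballI impI)
      fix y assume y: "y \<in> U0" "y (max M1 M2) = x (max M1 M2)"
      have "y M1 = x M1" "y M2 = x M2" using GH0_down[OF y(1) x y(2)] by simp_all
      then show "arr G y g \<in> a \<inter> b" using M1 M2 y(1) by blast
    qed
  qed
next
  case (UN K)
  show ?case
  proof (intro allI impI)
    fix x g assume x: "x \<in> U0" and g: "g \<in> carrier G" and m: "arr G x g \<in> \<Union>K"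
    then obtain k where k: "k \<in> K" "arr G x g \<in> k" by blast
    then obtain M where "\<forall>y\<in>U0. y M = x M \<longrightarrow> arr G y g \<in> k" using UN.IH x g by blast
    then show "\<exists>M. \<forall>y\<in>U0. y M = x M \<longrightarrow> arr G y g \<in> \<Union>K" using k by blast
  qed
next
  case (Basis s)
  then obtain N c g0 where s: "s = GH_basic G Q H N c g0" "g0 \<in> carrier G" unfolding SB_def by blast
  show ?case
  proof (intro allI impI)
    fix x g assume x: "x \<in> U0" and g: "g \<in> carrier G" and m: "arr G x g \<in> s"
    have xm: "x N = c" "inv g0 \<otimes> g \<in> Kx x" using m basic_mem[OF x g s(2)] s(1) by auto
    define h where "h = inv g0 \<otimes> g"
    have hc: "h \<in> carrier G" using h_def g s(2) by simp
    define M where "M = max N (word_len G Q h)"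
    have hD: "h \<in> D M" using in_some_D[OF hc] D_mono[of "word_len G Q h" M] M_def by auto
    show "\<exists>M. \<forall>y\<in>U0. y M = x M \<longrightarrow> arr G y g \<in> s"
    proof (intro exI[of _ M] ballI impI)
      fix y assume y: "y \<in> U0" "y M = x M"
      have "y N = c" using GH0_down[OF y(1) x y(2)] M_def xm by simp
      moreover have "h \<in> Kx y" using GH0_loc[OF y(1) x y(2) hD] xm h_def by simp
      ultimately show "arr G y g \<in> s" using basic_mem[OF y(1) g s(2)] s(1) h_def by simp
    qed
  qed
qed

lemma open_imp_crit: assumes "openin TT W" "x \<in> U0" "g \<in> carrier G" "arr G x g \<in> W"
  shows "\<exists>M. \<forall>y\<in>U0. y M = x M \<longrightarrow> arr G y g \<in> W"
  using gen_crit[of W] assms openin_topology_generated_by_iff[of SB W] unfolding TT_eq by blast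

lemma open_sub_A: "openin TT W \<Longrightarrow> W \<subseteq> A"
  using openin_subset topspace_TT by blast

lemma cont_crit: assumes fA: "\<And>a. a \<in> A \<Longrightarrow> f a \<in> A"
  and crit: "\<And>x g. x \<in> U0 \<Longrightarrow> g \<in> carrier G \<Longrightarrow> \<exists>x' g'. x' \<in> U0 \<and> g' \<in> carrier G \<and>
      f (arr G x g) = arr G x' g' \<and>
      (\<forall>M'. \<exists>M. \<forall>y\<in>U0. y M = x M \<longrightarrow> (\<exists>y'\<in>U0. f (arr G y g) = arr G y' g' \<and> y' M' = x' M'))"
  shows "continuous_map TT TT f"
  unfolding continuous_map topspace_TT
proof (intro conjI allI impI)
  show "f ` A \<subseteq> A" using fA by blast
  fix W assume W: "openin TT W"
  show "openin TT {a \<in> A. f a \<in> W}"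
  proof (rule open_crit)
    show "{a \<in> A. f a \<in> W} \<subseteq> A" by blast
    fix x g assume x: "x \<in> U0" and g: "g \<in> carrier G" and m: "arr G x g \<in> {a \<in> A. f a \<in> W}"
    obtain x' g' where x': "x' \<in> U0" "g' \<in> carrier G" "f (arr G x g) = arr G x' g'"
      and loc: "\<forall>M'. \<exists>M. \<forall>y\<in>U0. y M = x M \<longrightarrow> (\<exists>y'\<in>U0. f (arr G y g) = arr G y' g' \<and> y' M' = x' M')"
      using crit[OF x g] by blast
    have "arr G x' g' \<in> W" using m x' by simp
    then obtain M' where M': "\<forall>y\<in>U0. y M' = x' M' \<longrightarrow> arr G y g' \<in> W"
      using open_imp_crit[OF W x'(1,2)] by blast
    obtain M where M: "\<forall>y\<in>U0. y M = x M \<longrightarrow> (\<exists>y'\<in>U0. f (arr G y g) = arr G y' g' \<and> y' M' = x' M')"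
      using loc by blast
    show "\<exists>M. \<forall>y\<in>U0. y M = x M \<longrightarrow> arr G y g \<in> {a \<in> A. f a \<in> W}"
    proof (intro exI[of _ M] ballI impI)
      fix y assume y: "y \<in> U0" "y M = x M"
      then obtain y' where "y' \<in> U0" "f (arr G y g) = arr G y' g'" "y' M' = x' M'" using M by blast
      then show "arr G y g \<in> {a \<in> A. f a \<in> W}" using M' arr_in_A[OF y(1) g] by simp
    qed
  qed
qed


section \<open>Continuity, Hausdorff, etale\<close>

lemma conj_D: assumes "g \<in> carrier G" "h \<in> D n"
  shows "inv g \<otimes> h \<otimes> g \<in> D (n + word_len G Q g)"
proof -
  define l where "l = word_len G Q g"
  have gl: "g \<in> Bw l" "inv g \<in> Bw l" using word_len_Bw[OF assms(1)] Bw_inv l_def by auto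
  have "inv g \<otimes> h \<otimes> g \<in> Bw (l + (2*n+1) + l)"
    using Bw_mult[OF Bw_mult[OF gl(2) assms(2)[unfolded D_def]] gl(1)] .
  moreover have "l + (2*n+1) + l = 2*(n+l)+1" by simp
  ultimately show ?thesis unfolding D_def l_def by (simp add: add.commute)
qed

lemma uact_loc: assumes x: "x \<in> U0" and y: "y \<in> U0" and g: "g \<in> carrier G"
  and e: "y (M + word_len G Q g) = x (M + word_len G Q g)"
  shows "uact G Q H g y M = uact G Q H g x M"
proof -
  have "Kx (uact G Q H g y) \<inter> D M = Kx (uact G Q H g x) \<inter> D M"
  proof -
    { fix h assume h: "h \<in> D M"
      have hc: "h \<in> carrier G" using h D_carrier by auto
      have "inv g \<otimes> h \<otimes> g \<in> Kx y \<longleftrightarrow> inv g \<otimes> h \<otimes> g \<in> Kx x"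
        using GH0_loc[OF y x e conj_D[OF g h]] .
      then have "h \<in> conj_sub G g (Kx y) \<longleftrightarrow> h \<in> conj_sub G g (Kx x)"
        using conj_mem[OF Kx_carrier g] hc by simp }
    then show ?thesis using Kx_uact[OF x g] Kx_uact[OF y g] by blast
  qed
  then show ?thesis using GH0_eqn[OF uact_GH0[OF y g] uact_GH0[OF x g]] by simp
qed

lemma inv_cont: "continuous_map TT TT (GH_inv G Q H)"
proof (rule cont_crit)
  fix a assume "a \<in> A"
  then show "GH_inv G Q H a \<in> A" using groupoid unfolding is_groupoid_def by blast
next
  fix x g assume x: "x \<in> U0" and g: "g \<in> carrier G"
  show "\<exists>x' g'. x' \<in> U0 \<and> g' \<in> carrier G \<and> GH_inv G Q H (arr G x g) = arr G x' g' \<and>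
      (\<forall>M'. \<exists>M. \<forall>y\<in>U0. y M = x M \<longrightarrow> (\<exists>y'\<in>U0. GH_inv G Q H (arr G y g) = arr G y' g' \<and> y' M' = x' M'))"
  proof (rule exI, rule exI, intro conjI allI)
    show "uact G Q H g x \<in> U0" using uact_GH0[OF x g] .
    show "inv g \<in> carrier G" using g by simp
    show "GH_inv G Q H (arr G x g) = arr G (uact G Q H g x) (inv g)" using inv_arr[OF x g] .
    fix M'
    show "\<exists>M. \<forall>y\<in>U0. y M = x M \<longrightarrow> (\<exists>y'\<in>U0. GH_inv G Q H (arr G y g) = arr G y' (inv g) \<and> y' M' = uact G Q H g x M')"
    proof (intro exI[of _ "M' + word_len G Q g"] ballI impI)
      fix y assume y: "y \<in> U0" "y (M' + word_len G Q g) = x (M' + word_len G Q g)"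
      show "\<exists>y'\<in>U0. GH_inv G Q H (arr G y g) = arr G y' (inv g) \<and> y' M' = uact G Q H g x M'"
        using uact_GH0[OF y(1) g] inv_arr[OF y(1) g] uact_loc[OF x y(1) g y(2)] by blast
    qed
  qed
qed

lemma r_cont: "continuous_map TT TT (GH_r G)"
proof (rule cont_crit)
  fix a assume "a \<in> A"
  then show "GH_r G a \<in> A" using groupoid unfolding is_groupoid_def by blast
next
  fix x g assume x: "x \<in> U0" and g: "g \<in> carrier G"
  show "\<exists>x' g'. x' \<in> U0 \<and> g' \<in> carrier G \<and> GH_r G (arr G x g) = arr G x' g' \<and>
      (\<forall>M'. \<exists>M. \<forall>y\<in>U0. y M = x M \<longrightarrow> (\<exists>y'\<in>U0. GH_r G (arr G y g) = arr G y' g' \<and> y' M' = x' M'))"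
    using x r_arr by blast
qed

definition sig :: "'g \<Rightarrow> 'g unit_pt \<times> 'g set \<Rightarrow> 'g unit_pt \<times> 'g set" where
  "sig g0 b = arr G (fst b) g0"

lemma sig_cont: assumes g0: "g0 \<in> carrier G" shows "continuous_map TT TT (sig g0)"
proof (rule cont_crit)
  fix a assume "a \<in> A"
  then show "sig g0 a \<in> A" unfolding sig_def using A_elim arr_in_A g0 by fastforce
next
  fix x g assume x: "x \<in> U0" and g: "g \<in> carrier G"
  show "\<exists>x' g'. x' \<in> U0 \<and> g' \<in> carrier G \<and> sig g0 (arr G x g) = arr G x' g' \<and>
      (\<forall>M'. \<exists>M. \<forall>y\<in>U0. y M = x M \<longrightarrow> (\<exists>y'\<in>U0. sig g0 (arr G y g) = arr G y' g' \<and> y' M' = x' M'))"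
    using x g0 unfolding sig_def by auto
qed

lemma hausdorff: "Hausdorff_space TT"
  unfolding Hausdorff_space_def topspace_TT
proof (intro allI impI)
  fix a b assume ab: "a \<in> A \<and> b \<in> A \<and> a \<noteq> b"
  obtain x g where xg: "x \<in> U0" "g \<in> carrier G" "a = arr G x g" using A_elim ab by blast
  obtain y h where yh: "y \<in> U0" "h \<in> carrier G" "b = arr G y h" using A_elim ab by blast
  have disj: "disjnt (GH_basic G Q H N c g) (GH_basic G Q H N c' h)"
    if "\<And>z. z \<in> U0 \<Longrightarrow> z N = c \<Longrightarrow> z N = c' \<Longrightarrow> inv g \<otimes> h \<in> Kx z \<Longrightarrow> False" for N c c'
  proof -
    { fix e assume e1: "e \<in> GH_basic G Q H N c g" and e2: "e \<in> GH_basic G Q H N c' h"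
      obtain z where z: "z \<in> U0" "z N = c" "e = arr G z g" using basic_elems[OF e1] by blast
      obtain z' where z': "z' \<in> U0" "z' N = c'" "e = arr G z' h" using basic_elems[OF e2] by blast
      have "arr G z g = arr G z' h" using z(3) z'(3) by simp
      then have "z = z' \<and> inv g \<otimes> h \<in> Kx z" using arr_eq_iff[OF z(1) z'(1) xg(2) yh(2)] by blast
      then have eq: "z = z'" and k: "inv g \<otimes> h \<in> Kx z" by blast+
      have "z N = c'" using z'(2) eq by simp
      then have False using that[OF z(1) z(2) _ k] by blast }
    then show ?thesis unfolding disjnt_def by blast
  qed
  show "\<exists>U V. openin TT U \<and> openin TT V \<and> a \<in> U \<and> b \<in> V \<and> disjnt U V"
  proof (cases "x = y")
    case True
    define f where "f = inv g \<otimes> h"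
    have fc: "f \<in> carrier G" using f_def xg yh by simp
    have fn: "f \<notin> Kx x" using ab xg yh True arr_eq_iff[OF xg(1) yh(1) xg(2) yh(2)] f_def by simp
    define N where "N = max (word_len G Q f) (max (word_len G Q g) (word_len G Q h))"
    have fD: "f \<in> D N" using in_some_D[OF fc] D_mono[of "word_len G Q f" N] N_def by auto
    have "disjnt (GH_basic G Q H N (x N) g) (GH_basic G Q H N (x N) h)"
      by (rule disj) (use GH0_loc[OF _ xg(1) _ fD] fn f_def in blast)
    moreover have "word_len G Q g \<le> N" "word_len G Q h \<le> N" using N_def by auto
    ultimately show ?thesis using nbhd[OF xg(1,2), of N] nbhd[OF yh(1,2), of N] xg(3) yh(3) True by blast
  next
    case False
    then have "Kx x \<noteq> Kx y" using GH0_eq[OF xg(1) yh(1)] by simp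
    then obtain f where f: "f \<in> Kx x \<longleftrightarrow> f \<notin> Kx y" "f \<in> carrier G" using Kx_carrier by blast
    define N where "N = max (word_len G Q f) (max (word_len G Q g) (word_len G Q h))"
    have fD: "f \<in> D N" using in_some_D[OF f(2)] D_mono[of "word_len G Q f" N] N_def by auto
    have "x N \<noteq> y N" using GH0_loc[OF xg(1) yh(1) _ fD] f by blast
    then have "disjnt (GH_basic G Q H N (x N) g) (GH_basic G Q H N (y N) h)"
      by (intro disj) simp
    moreover have "word_len G Q g \<le> N" "word_len G Q h \<le> N" using N_def by auto
    ultimately show ?thesis using nbhd[OF xg(1,2), of N] nbhd[OF yh(1,2), of N] xg(3) yh(3) by blast
  qed
qed

lemma etale: "is_etale TT (GH_r G)"
  unfolding is_etale_def topspace_TT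
proof
  fix a assume "a \<in> A"
  then obtain x g where xg: "x \<in> U0" "g \<in> carrier G" "a = arr G x g" using A_elim by blast
  define N where "N = word_len G Q g"
  define V where "V = GH_basic G Q H N (x N) g"
  have Vo: "openin TT V" "a \<in> V" using nbhd[OF xg(1,2), of N] N_def V_def xg(3) by auto
  have rV: "GH_r G ` V = GH_basic G Q H N (x N) \<one>"
  proof
    show "GH_r G ` V \<subseteq> GH_basic G Q H N (x N) \<one>"
    proof
      fix b assume "b \<in> GH_r G ` V"
      then obtain z where z: "z \<in> U0" "z N = x N" "b = GH_r G (arr G z g)" using basic_elems V_def by blast
      then show "b \<in> GH_basic G Q H N (x N) \<one>" unfolding r_arr GH_basic_def by blast
    qed
    show "GH_basic G Q H N (x N) \<one> \<subseteq> GH_r G ` V"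
    proof
      fix b assume "b \<in> GH_basic G Q H N (x N) \<one>"
      then obtain z where z: "z \<in> U0" "z N = x N" "b = arr G z \<one>" using basic_elems by blast
      then have "arr G z g \<in> V" "b = GH_r G (arr G z g)" unfolding V_def GH_basic_def r_arr by blast+
      then show "b \<in> GH_r G ` V" by blast
    qed
  qed
  have rVo: "openin TT (GH_r G ` V)" unfolding rV using nbhd(1)[OF xg(1) one_closed] word_len_one by simp
  have VA: "V \<subseteq> A" using Vo open_sub_A by blast
  have rVA: "GH_r G ` V \<subseteq> A" using rVo open_sub_A by blast
  have hm: "homeomorphic_maps (subtopology TT V) (subtopology TT (GH_r G ` V)) (GH_r G) (sig g)"
    unfolding homeomorphic_maps_def
  proof (intro conjI ballI)
    have "GH_r G \<in> topspace (subtopology TT V) \<rightarrow> GH_r G ` V" by (rule funcsetI) simp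
    then show "continuous_map (subtopology TT V) (subtopology TT (GH_r G ` V)) (GH_r G)"
      unfolding continuous_map_in_subtopology
      using continuous_map_from_subtopology[OF r_cont] by blast
    have sV: "sig g b \<in> V" if "b \<in> GH_r G ` V" for b
    proof -
      have "b \<in> GH_basic G Q H N (x N) \<one>" using that rV by simp
      then obtain y where y: "y \<in> U0" "y N = x N" "b = arr G y \<one>" using basic_elems by blast
      then show ?thesis unfolding V_def sig_def GH_basic_def by simp blast
    qed
    have "sig g \<in> topspace (subtopology TT (GH_r G ` V)) \<rightarrow> V" by (rule funcsetI) (simp add: sV)
    then show "continuous_map (subtopology TT (GH_r G ` V)) (subtopology TT V) (sig g)"
      unfolding continuous_map_in_subtopology
      using continuous_map_from_subtopology[OF sig_cont[OF xg(2)]] by blast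
    fix b assume b: "b \<in> topspace (subtopology TT V)"
    then have "b \<in> GH_basic G Q H N (x N) g" unfolding V_def by simp
    then obtain y where y: "y \<in> U0" "b = arr G y g" using basic_elems by blast
    then show "sig g (GH_r G b) = b" unfolding sig_def by (simp add: r_arr)
  next
    fix b assume b: "b \<in> topspace (subtopology TT (GH_r G ` V))"
    then have "b \<in> GH_basic G Q H N (x N) \<one>" unfolding rV by simp
    then obtain y where y: "y \<in> U0" "b = arr G y \<one>" using basic_elems by blast
    then show "GH_r G (sig g b) = b" unfolding sig_def r_arr by simp
  qed
  show "\<exists>V. openin TT V \<and> a \<in> V \<and> openin TT (GH_r G ` V) \<and>
          homeomorphic_map (subtopology TT V) (subtopology TT (GH_r G ` V)) (GH_r G)"
    using Vo rVo homeomorphic_maps_imp_map[OF hm] by blast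
qed


section \<open>The space Sub and Z\<close>

abbreviation ST where "ST \<equiv> Sub_topology G"

definition SS where "SS = {{K \<in> Sub G. g \<in> K} | g. g \<in> carrier G} \<union> {{K \<in> Sub G. g \<notin> K} | g. g \<in> carrier G}"

lemma ST_eq: "ST = topology_generated_by SS" unfolding Sub_topology_def SS_def by simp

lemma topspace_ST: "topspace ST = Sub G"
proof -
  have "\<Union>SS \<subseteq> Sub G" unfolding SS_def by blast
  moreover have "Sub G \<subseteq> \<Union>SS"
  proof
    fix K assume K: "K \<in> Sub G"
    then have "\<one> \<in> K" unfolding Sub_def using subgroup.one_closed by blast
    then have "K \<in> {K \<in> Sub G. \<one> \<in> K}" using K by blast
    moreover have "{K \<in> Sub G. \<one> \<in> K} \<in> SS" unfolding SS_def by blast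
    ultimately show "K \<in> \<Union>SS" by blast
  qed
  ultimately show ?thesis unfolding ST_eq by simp
qed

lemma ST_fin_open: assumes "finite F" "F \<subseteq> carrier G"
  shows "openin ST {K' \<in> Sub G. K' \<inter> F = S \<inter> F}"
  using assms
proof (induction F rule: finite_induct)
  case empty
  have "{K' \<in> Sub G. K' \<inter> {} = S \<inter> {}} = topspace ST" using topspace_ST by simp
  then show ?case by simp
next
  case (insert f F)
  have fc: "f \<in> carrier G" using insert by simp
  define B where "B = (if f \<in> S then {K \<in> Sub G. f \<in> K} else {K \<in> Sub G. f \<notin> K})"
  have "B \<in> SS" unfolding SS_def B_def using fc by auto
  then have Bo: "openin ST B" unfolding ST_eq by (rule topology_generated_by_Basis)
  have "{K' \<in> Sub G. K' \<inter> insert f F = S \<inter> insert f F} = {K' \<in> Sub G. K' \<inter> F = S \<inter> F} \<inter> B"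
    unfolding B_def by auto
  then show ?case using openin_Int[OF insert.IH Bo] insert.prems by simp
qed

lemma ST_D_open: "openin ST {K' \<in> Sub G. K' \<inter> D n = S \<inter> D n}"
  using ST_fin_open[OF D_finite D_carrier] .

definition agr :: "'g set \<Rightarrow> 'g set \<Rightarrow> 'g set \<Rightarrow> bool" where
  "agr F K K' \<longleftrightarrow> K' \<inter> F = K \<inter> F"

lemma agr_Un: "agr (F1 \<union> F2) K K' \<Longrightarrow> agr F1 K K' \<and> agr F2 K K'"
  unfolding agr_def by blast

lemma ST_gen_crit: assumes "generate_topology_on SS W"
  shows "\<forall>K\<in>W. \<exists>F. finite F \<and> F \<subseteq> carrier G \<and> (\<forall>K'\<in>Sub G. agr F K K' \<longrightarrow> K' \<in> W)"
  using assms
proof (induction rule: generate_topology_on.induct)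
  case Empty then show ?case by simp
next
  case (Int a b)
  show ?case
  proof
    fix K assume "K \<in> a \<inter> b"
    then have Ka: "K \<in> a" and Kb: "K \<in> b" by auto
    obtain F1 where F1: "finite F1" "F1 \<subseteq> carrier G" "\<forall>K'\<in>Sub G. agr F1 K K' \<longrightarrow> K' \<in> a"
      by (insert bspec[OF Int.IH(1) Ka], elim exE conjE, rule that)
    obtain F2 where F2: "finite F2" "F2 \<subseteq> carrier G" "\<forall>K'\<in>Sub G. agr F2 K K' \<longrightarrow> K' \<in> b"
      by (insert bspec[OF Int.IH(2) Kb], elim exE conjE, rule that)
    have "\<forall>K'\<in>Sub G. agr (F1 \<union> F2) K K' \<longrightarrow> K' \<in> a \<inter> b"
      using F1(3) F2(3) agr_Un by blast
    moreover have "finite (F1 \<union> F2)" "F1 \<union> F2 \<subseteq> carrier G" using F1 F2 by simp_all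
    ultimately show "\<exists>F. finite F \<and> F \<subseteq> carrier G \<and> (\<forall>K'\<in>Sub G. agr F K K' \<longrightarrow> K' \<in> a \<inter> b)"
      by blast
  qed
next
  case (UN K)
  show ?case
  proof
    fix L assume "L \<in> \<Union>K"
    then obtain k where k: "k \<in> K" "L \<in> k" by blast
    have "\<exists>F. finite F \<and> F \<subseteq> carrier G \<and> (\<forall>K'\<in>Sub G. agr F L K' \<longrightarrow> K' \<in> k)"
      using bspec[OF UN.IH[OF k(1)] k(2)] .
    then show "\<exists>F. finite F \<and> F \<subseteq> carrier G \<and> (\<forall>K'\<in>Sub G. agr F L K' \<longrightarrow> K' \<in> \<Union>K)"
      using k(1) by blast
  qed
next
  case (Basis s)
  then obtain g where g: "g \<in> carrier G" "s = {K \<in> Sub G. g \<in> K} \<or> s = {K \<in> Sub G. g \<notin> K}"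
    unfolding SS_def by blast
  show ?case
  proof
    fix K assume Ks: "K \<in> s"
    have "\<forall>K'\<in>Sub G. agr {g} K K' \<longrightarrow> K' \<in> s"
    proof (intro ballI impI)
      fix K' assume K': "K' \<in> Sub G" "agr {g} K K'"
      then have "g \<in> K' \<longleftrightarrow> g \<in> K" unfolding agr_def by blast
      then show "K' \<in> s" using g(2) Ks K'(1) by auto
    qed
    then show "\<exists>F. finite F \<and> F \<subseteq> carrier G \<and> (\<forall>K'\<in>Sub G. agr F K K' \<longrightarrow> K' \<in> s)"
      using g(1) by (intro exI[of _ "{g}"]) simp
  qed
qed

lemma ST_open_D: assumes "openin ST W" "K \<in> W"
  shows "\<exists>n. \<forall>K'\<in>Sub G. K' \<inter> D n = K \<inter> D n \<longrightarrow> K' \<in> W"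
proof -
  have g0: "generate_topology_on SS W" using assms(1) openin_topology_generated_by_iff[of SS W] unfolding ST_eq by simp
  obtain F where F: "finite F" "F \<subseteq> carrier G" "\<forall>K'\<in>Sub G. agr F K K' \<longrightarrow> K' \<in> W"
    by (insert bspec[OF ST_gen_crit[OF g0] assms(2)], elim exE conjE, rule that)
  obtain n where n: "F \<subseteq> D n" using finite_in_D[OF F(1,2)] by blast
  show ?thesis
  proof (intro exI[of _ n] ballI impI)
    fix K' assume K': "K' \<in> Sub G" "K' \<inter> D n = K \<inter> D n"
    then have "agr F K K'" unfolding agr_def using n by blast
    then show "K' \<in> W" using F(3) K'(1) by blast
  qed
qed

lemma Z_conj: "K \<in> Z \<Longrightarrow> g \<in> carrier G \<Longrightarrow> conj_sub G g K \<in> Z"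
  using URS unfolding is_URS_def by blast

lemma Z_closure: "K \<in> Z \<Longrightarrow> ST closure_of {conj_sub G g K | g. g \<in> carrier G} = Z"
  using URS unfolding is_URS_def by blast

lemma Z_approx: assumes "K \<in> Z" "K' \<in> Z"
  shows "\<exists>g\<in>carrier G. conj_sub G g K' \<inter> D n = K \<inter> D n"
proof -
  have "K \<in> ST closure_of {conj_sub G g K' | g. g \<in> carrier G}" using Z_closure[OF assms(2)] assms(1) by simp
  then have cl: "\<forall>T. K \<in> T \<and> openin ST T \<longrightarrow> (\<exists>y. y \<in> {conj_sub G g K' | g. g \<in> carrier G} \<and> y \<in> T)"
    unfolding in_closure_of by (elim conjE)
  have KT: "K \<in> {K'' \<in> Sub G. K'' \<inter> D n = K \<inter> D n}" using assms(1) Z_Sub by blast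
  have "\<exists>y. y \<in> {conj_sub G g K' | g. g \<in> carrier G} \<and> y \<in> {K'' \<in> Sub G. K'' \<inter> D n = K \<inter> D n}"
    using cl[rule_format, OF conjI[OF KT ST_D_open[of n K]]] .
  then obtain g where g: "g \<in> carrier G" "conj_sub G g K' \<inter> D n = K \<inter> D n" by auto
  then show ?thesis by (intro bexI[of _ g])
qed

lemma Z_realizable: assumes "K \<in> Z" shows "realizable K"
  unfolding realizable_def
proof
  fix n
  obtain g where g: "g \<in> carrier G" "conj_sub G g H \<inter> D n = K \<inter> D n" using Z_approx[OF assms HZ] by blast
  have "g <# H \<in> V" unfolding schreier_vertices_def using g by blast
  moreover have "tr n (g <# H) = K \<inter> D n" unfolding tr_def stab_lcos[OF g(1)] using g(2) .
  ultimately show "\<exists>p\<in>V. tr n p = K \<inter> D n" by blast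
qed

lemma Z_carrier: "K \<in> Z \<Longrightarrow> K \<subseteq> carrier G"
  using Z_Sub unfolding Sub_def using subgroup.subset by blast

lemma Z_unit: assumes "K \<in> Z" shows "unit_of K \<in> U0" "Kx (unit_of K) = K"
  using unit_of_GH0[OF Z_carrier[OF assms] Z_realizable[OF assms]] by simp_all

lemma Kx_Z: assumes x: "x \<in> U0" shows "Kx x \<in> Z"
proof -
  have "Kx x \<in> ST closure_of {conj_sub G g H | g. g \<in> carrier G}"
    unfolding in_closure_of
  proof (intro conjI allI impI)
    show "Kx x \<in> topspace ST" unfolding topspace_ST Sub_def using Kx_sub[OF x] by simp
    fix W assume W: "Kx x \<in> W \<and> openin ST W"
    have W2: "openin ST W" and W1: "Kx x \<in> W" using W by simp_all
    obtain n where n: "\<forall>K'\<in>Sub G. K' \<inter> D n = Kx x \<inter> D n \<longrightarrow> K' \<in> W"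
      by (insert ST_open_D[OF W2 W1], elim exE, rule that)
    obtain g where g: "g \<in> carrier G" "pick x n = g <# H"
      using pick_in(2)[OF x] unfolding schreier_vertices_def by blast
    have "Kx x \<inter> D n = conj_sub G g H \<inter> D n"
      using Kx_D[OF x, of n] unfolding T_def tr_def g(2) stab_lcos[OF g(1)] .
    then have "conj_sub G g H \<inter> D n = Kx x \<inter> D n" by simp
    moreover have "conj_sub G g H \<in> Sub G" unfolding Sub_def
      using stab_subgroup[OF l_coset_subset_G[OF subgroup.subset[OF H_sub] g(1)]] stab_lcos[OF g(1)] by simp
    ultimately have "conj_sub G g H \<in> W" using n by simp
    then show "\<exists>y. y \<in> {conj_sub G g H | g. g \<in> carrier G} \<and> y \<in> W" using g(1) by blast
  qed
  then show ?thesis using Z_closure[OF HZ] by simp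
qed

lemma open_Kx: assumes "h \<in> carrier G" shows "openin TT {a \<in> A. (h \<in> Kx (fst a)) = P}"
proof (rule open_crit)
  fix x g assume x: "x \<in> U0" and g: "g \<in> carrier G" and m: "arr G x g \<in> {a \<in> A. (h \<in> Kx (fst a)) = P}"
  show "\<exists>M. \<forall>y\<in>U0. y M = x M \<longrightarrow> arr G y g \<in> {a \<in> A. (h \<in> Kx (fst a)) = P}"
  proof (intro exI[of _ "word_len G Q h"] ballI impI)
    fix y assume y: "y \<in> U0" "y (word_len G Q h) = x (word_len G Q h)"
    have "h \<in> Kx y \<longleftrightarrow> h \<in> Kx x" using GH0_loc[OF y(1) x y(2) in_some_D[OF assms]] .
    then show "arr G y g \<in> {a \<in> A. (h \<in> Kx (fst a)) = P}" using m arr_in_A[OF y(1) g] by simp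
  qed
qed blast

lemma UU_sub_A: "UU \<subseteq> A" using groupoid unfolding is_groupoid_def by blast

lemma UU_elim: "u \<in> UU \<Longrightarrow> \<exists>x. x \<in> U0 \<and> u = arr G x \<one>" unfolding UU_eq by blast

lemma homeo: "(subtopology TT UU) homeomorphic_space (subtopology ST Z)"
  unfolding homeomorphic_space_def
proof (intro exI)
  define phi where "phi u = Kx (fst u)" for u :: "'g unit_pt \<times> 'g set"
  define psi where "psi K = arr G (unit_of K) \<one>" for K
  have tU: "topspace (subtopology TT UU) = UU" using UU_sub_A topspace_TT by auto
  have tZ: "topspace (subtopology ST Z) = Z" using Z_Sub topspace_ST by auto
  show "homeomorphic_maps (subtopology TT UU) (subtopology ST Z) phi psi"
    unfolding homeomorphic_maps_def
  proof (intro conjI ballI)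
    have phiZ: "phi \<in> topspace (subtopology TT UU) \<rightarrow> Z"
    proof (rule funcsetI)
      fix u assume "u \<in> topspace (subtopology TT UU)"
      then have "u \<in> UU" using tU by simp
      then obtain x where "x \<in> U0" "u = arr G x \<one>" using UU_elim by blast
      then show "phi u \<in> Z" unfolding phi_def using Kx_Z by simp
    qed
    have "continuous_map (subtopology TT UU) ST phi"
      unfolding ST_eq
    proof (rule continuous_on_generated_topo)
      fix S assume "S \<in> SS"
      have "\<exists>h P. h \<in> carrier G \<and> S = {K \<in> Sub G. (h \<in> K) = P}"
      proof -
        obtain h where h: "h \<in> carrier G" "S = {K \<in> Sub G. h \<in> K} \<or> S = {K \<in> Sub G. h \<notin> K}"
          using \<open>S \<in> SS\<close> unfolding SS_def by blast
        show ?thesis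
        proof (cases "S = {K \<in> Sub G. h \<in> K}")
          case True then show ?thesis using h(1) by (intro exI[of _ h] exI[of _ True]) simp
        next
          case False then show ?thesis using h by (intro exI[of _ h] exI[of _ False]) simp
        qed
      qed
      then obtain h P where h: "h \<in> carrier G" "S = {K \<in> Sub G. (h \<in> K) = P}" by blast
      have "phi -` S \<inter> topspace (subtopology TT UU) = UU \<inter> {a \<in> A. (h \<in> Kx (fst a)) = P}"
      proof -
        have "phi u \<in> Sub G" if "u \<in> UU" for u
          using that UU_elim Kx_Z Z_Sub unfolding phi_def by fastforce
        then show ?thesis unfolding h(2) tU phi_def using UU_sub_A by auto
      qed
      then show "openin (subtopology TT UU) (phi -` S \<inter> topspace (subtopology TT UU))"
        using openin_subtopology_Int2[OF open_Kx[OF h(1)]] by simp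
    next
      show "phi ` topspace (subtopology TT UU) \<subseteq> \<Union> SS"
        using phiZ Z_Sub topspace_ST unfolding ST_eq by auto
    qed
    then show "continuous_map (subtopology TT UU) (subtopology ST Z) phi"
      unfolding continuous_map_in_subtopology using phiZ by blast
    have psiU: "psi \<in> topspace (subtopology ST Z) \<rightarrow> UU"
      using Z_unit unfolding tZ psi_def UU_eq by auto
    have "continuous_map (subtopology ST Z) TT psi"
      unfolding continuous_map
    proof (intro conjI allI impI)
      show "psi ` topspace (subtopology ST Z) \<subseteq> topspace TT"
        using psiU UU_sub_A topspace_TT by auto
      fix W assume W: "openin TT W"
      show "openin (subtopology ST Z) {K \<in> topspace (subtopology ST Z). psi K \<in> W}"
        unfolding openin_subopen[of _ "{K \<in> topspace (subtopology ST Z). psi K \<in> W}"]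
      proof
        fix K assume K: "K \<in> {K \<in> topspace (subtopology ST Z). psi K \<in> W}"
        then have KZ: "K \<in> Z" and KW: "arr G (unit_of K) \<one> \<in> W" using tZ psi_def by auto
        obtain M where M: "\<forall>y\<in>U0. y M = unit_of K M \<longrightarrow> arr G y \<one> \<in> W"
          using open_imp_crit[OF W Z_unit(1)[OF KZ] one_closed KW] by blast
        define T where "T = Z \<inter> {K' \<in> Sub G. K' \<inter> D M = K \<inter> D M}"
        have "openin (subtopology ST Z) T" unfolding T_def by (rule openin_subtopology_Int2[OF ST_D_open])
        moreover have "K \<in> T" unfolding T_def using KZ Z_Sub by blast
        moreover have "T \<subseteq> {K \<in> topspace (subtopology ST Z). psi K \<in> W}"
        proof
          fix K' assume K': "K' \<in> T"
          then have K'Z: "K' \<in> Z" and e: "K' \<inter> D M = K \<inter> D M" unfolding T_def by auto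
          have "unit_of K' M = unit_of K M"
            using GH0_eqn[OF Z_unit(1)[OF K'Z] Z_unit(1)[OF KZ]] Z_unit(2)[OF K'Z] Z_unit(2)[OF KZ] e by simp
          then have "psi K' \<in> W" unfolding psi_def using M Z_unit(1)[OF K'Z] by blast
          then show "K' \<in> {K \<in> topspace (subtopology ST Z). psi K \<in> W}" using K'Z tZ by blast
        qed
        ultimately show "\<exists>T. openin (subtopology ST Z) T \<and> K \<in> T \<and> T \<subseteq> {K \<in> topspace (subtopology ST Z). psi K \<in> W}"
          by blast
      qed
    qed
    then show "continuous_map (subtopology ST Z) (subtopology TT UU) psi"
      unfolding continuous_map_in_subtopology using psiU by blast
  next
    fix u assume "u \<in> topspace (subtopology TT UU)"
    then have "u \<in> UU" using tU by simp
    then obtain x where x: "x \<in> U0" "u = arr G x \<one>" using UU_elim by blast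
    show "psi (phi u) = u" unfolding psi_def phi_def x(2) fst_arr using x_unit[OF x(1)] by simp
  next
    fix K assume "K \<in> topspace (subtopology ST Z)"
    then have "K \<in> Z" using tZ by simp
    then show "phi (psi K) = K" unfolding psi_def phi_def fst_arr using Z_unit by simp
  qed
qed


section \<open>Total disconnectedness, minimality, continuity of multiplication\<close>

lemma tU: "topspace (subtopology TT UU) = UU" using UU_sub_A topspace_TT by auto

lemma tdisc: "totally_disconnected_space (subtopology TT UU)"
  unfolding totally_disconnected_space_def
proof (intro allI impI ballI)
  fix C y z assume conn: "connectedin (subtopology TT UU) C" and y: "y \<in> C" and z: "z \<in> C"
  show "y = z"
  proof (rule ccontr)
    assume ne: "y \<noteq> z"
    have CU: "C \<subseteq> UU" using conn tU unfolding connectedin_def by auto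
    obtain x where x: "x \<in> U0" "y = arr G x \<one>" using UU_elim CU y by blast
    obtain x' where x': "x' \<in> U0" "z = arr G x' \<one>" using UU_elim CU z by blast
    have "x \<noteq> x'" using ne x x' by blast
    then have "Kx x \<noteq> Kx x'" using GH0_eq[OF x(1) x'(1)] by simp
    then obtain f where f: "(f \<in> Kx x) \<noteq> (f \<in> Kx x')" "f \<in> carrier G" using Kx_carrier by blast
    define E1 where "E1 = UU \<inter> {a \<in> A. (f \<in> Kx (fst a)) = True}"
    define E2 where "E2 = UU \<inter> {a \<in> A. (f \<in> Kx (fst a)) = False}"
    have o1: "openin (subtopology TT UU) E1" unfolding E1_def by (rule openin_subtopology_Int2[OF open_Kx[OF f(2)]])
    have o2: "openin (subtopology TT UU) E2" unfolding E2_def by (rule openin_subtopology_Int2[OF open_Kx[OF f(2)]])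
    have cov: "C \<subseteq> E1 \<union> E2" using CU UU_sub_A unfolding E1_def E2_def by auto
    have dis: "E1 \<inter> E2 \<inter> C = {}" unfolding E1_def E2_def by auto
    have yA: "y \<in> A" "z \<in> A" using CU UU_sub_A y z by auto
    have "(y \<in> E1 \<and> z \<in> E2) \<or> (y \<in> E2 \<and> z \<in> E1)"
      using f(1) x x' y z CU yA unfolding E1_def E2_def by auto
    then have "E1 \<inter> C \<noteq> {} \<and> E2 \<inter> C \<noteq> {}" using y z by blast
    then show False using conn o1 o2 cov dis unfolding connectedin by blast
  qed
qed

lemma minimal: "is_minimal_groupoid TT UU (GH_r G) (GH_s G Q H)"
  unfolding is_minimal_groupoid_def
proof
  fix u assume "u \<in> UU"
  then obtain x where x: "x \<in> U0" "u = arr G x \<one>" using UU_elim by blast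
  define Orb where "Orb = {GH_s G Q H a | a. a \<in> topspace TT \<and> GH_r G a = u}"
  have "subtopology TT UU closure_of Orb \<subseteq> UU" using closure_of_subset_topspace tU by metis
  moreover have "UU \<subseteq> subtopology TT UU closure_of Orb"
  proof
    fix v assume v: "v \<in> UU"
    then obtain y where y: "y \<in> U0" "v = arr G y \<one>" using UU_elim by blast
    show "v \<in> subtopology TT UU closure_of Orb"
      unfolding in_closure_of
    proof (intro conjI allI impI)
      show "v \<in> topspace (subtopology TT UU)" using v tU by simp
      fix T assume T: "v \<in> T \<and> openin (subtopology TT UU) T"
      then obtain W where W: "openin TT W" "T = W \<inter> UU" unfolding openin_subtopology by blast
      have vW: "arr G y \<one> \<in> W" using T W y by blast
      obtain M where M: "\<forall>y'\<in>U0. y' M = y M \<longrightarrow> arr G y' \<one> \<in> W"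
        using open_imp_crit[OF W(1) y(1) one_closed vW] by blast
      obtain g where g: "g \<in> carrier G" "conj_sub G g (Kx x) \<inter> D M = Kx y \<inter> D M"
        using Z_approx[OF Kx_Z[OF y(1)] Kx_Z[OF x(1)]] by blast
      define y' where "y' = uact G Q H g x"
      have y': "y' \<in> U0" "Kx y' = conj_sub G g (Kx x)" using uact_GH0[OF x(1) g(1)] Kx_uact[OF x(1) g(1)] y'_def by auto
      have "y' M = y M" using GH0_eqn[OF y'(1) y(1)] y'(2) g(2) by simp
      then have inW: "arr G y' \<one> \<in> W" using M y'(1) by blast
      have aA: "arr G x g \<in> topspace TT" using arr_in_A[OF x(1) g(1)] topspace_TT by simp
      have "GH_s G Q H (arr G x g) = arr G y' \<one>" using s_arr[OF x(1) g(1)] y'_def by simp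
      moreover have "GH_r G (arr G x g) = u" using x(2) r_arr by simp
      ultimately have "arr G y' \<one> \<in> Orb" unfolding Orb_def using aA
        by (intro CollectI exI[of _ "arr G x g"]) simp
      moreover have "arr G y' \<one> \<in> T" using inW W(2) y'(1) UU_eq by blast
      ultimately show "\<exists>w. w \<in> Orb \<and> w \<in> T" by blast
    qed
  qed
  ultimately show "subtopology TT UU closure_of Orb = UU" by blast
qed

lemma mult_cont: "continuous_map (subtopology (prod_topology TT TT) (composable_pairs (topspace TT) (GH_r G) (GH_s G Q H)))
    TT (\<lambda>(a, b). GH_mult G a b)"
proof -
  define CP where "CP = composable_pairs (topspace TT) (GH_r G) (GH_s G Q H)"
  have CP: "CP = {(a, b). a \<in> A \<and> b \<in> A \<and> GH_s G Q H a = GH_r G b}"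
    unfolding CP_def composable_pairs_def topspace_TT ..
  have CPsub: "CP \<subseteq> A \<times> A" unfolding CP by blast
  have tX: "topspace (subtopology (prod_topology TT TT) CP) = CP"
    unfolding topspace_subtopology topspace_prod_topology topspace_TT using CPsub by blast
  have mA: "GH_mult G a b \<in> A" if ab: "(a, b) \<in> CP" for a b
  proof -
    have a: "a \<in> A" and b: "b \<in> A" and c: "GH_s G Q H a = GH_r G b" using ab unfolding CP by simp_all
    obtain x g1 where xg: "x \<in> U0" "g1 \<in> carrier G" "a = arr G x g1" using A_elim a by blast
    obtain y g2 where yh: "y \<in> U0" "g2 \<in> carrier G" "b = arr G y g2" using A_elim b by blast
    have y: "y = uact G Q H g1 x" using composable[OF xg(1,2) yh(1,2)] c xg yh by simp
    have "GH_mult G a b = arr G x (g2 \<otimes> g1)" unfolding xg yh y by (rule mult_arr[OF xg(1,2) yh(2)])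
    then show ?thesis using arr_in_A[OF xg(1) m_closed[OF yh(2) xg(2)]] by simp
  qed
  have "continuous_map (subtopology (prod_topology TT TT) CP) TT (\<lambda>(a, b). GH_mult G a b)"
    unfolding continuous_map
  proof (intro conjI allI impI)
    show "(\<lambda>(a, b). GH_mult G a b) ` topspace (subtopology (prod_topology TT TT) CP) \<subseteq> topspace TT"
      unfolding tX topspace_TT using mA by (auto split: prod.splits)
    fix W assume W: "openin TT W"
    show "openin (subtopology (prod_topology TT TT) CP)
       {p \<in> topspace (subtopology (prod_topology TT TT) CP). (\<lambda>(a, b). GH_mult G a b) p \<in> W}"
      unfolding tX openin_subopen[of "subtopology (prod_topology TT TT) CP"
        "{p \<in> CP. (\<lambda>(a, b). GH_mult G a b) p \<in> W}"]
    proof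
      fix p assume p: "p \<in> {p \<in> CP. (\<lambda>(a, b). GH_mult G a b) p \<in> W}"
      obtain a b where ab: "p = (a, b)" by (cases p)
      have pCP: "(a, b) \<in> CP" and mW: "GH_mult G a b \<in> W" using p unfolding ab by simp_all
      have a: "a \<in> A" and b: "b \<in> A" and c: "GH_s G Q H a = GH_r G b" using pCP unfolding CP by simp_all
      obtain x g1 where xg: "x \<in> U0" "g1 \<in> carrier G" "a = arr G x g1" using A_elim a by blast
      obtain y g2 where yh: "y \<in> U0" "g2 \<in> carrier G" "b = arr G y g2" using A_elim b by blast
      have y: "y = uact G Q H g1 x" using composable[OF xg(1,2) yh(1,2)] c xg yh by simp
      have "GH_mult G a b = arr G x (g2 \<otimes> g1)" unfolding xg yh y by (rule mult_arr[OF xg(1,2) yh(2)])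
      then have "arr G x (g2 \<otimes> g1) \<in> W" using mW by simp
      then obtain M where M: "\<forall>y'\<in>U0. y' M = x M \<longrightarrow> arr G y' (g2 \<otimes> g1) \<in> W"
        using open_imp_crit[OF W xg(1) m_closed[OF yh(2) xg(2)]] by blast
      define N1 where "N1 = max M (word_len G Q g1)"
      define N2 where "N2 = word_len G Q g2"
      define U1 where "U1 = GH_basic G Q H N1 (x N1) g1"
      define U2 where "U2 = GH_basic G Q H N2 (y N2) g2"
      have U1: "openin TT U1" "a \<in> U1" using nbhd[OF xg(1,2), of N1] N1_def U1_def xg(3) by auto
      have U2: "openin TT U2" "b \<in> U2" using nbhd[OF yh(1,2), of N2] N2_def U2_def yh(3) by auto
      define T where "T = CP \<inter> (U1 \<times> U2)"
      have "openin (prod_topology TT TT) (U1 \<times> U2)" using U1(1) U2(1) openin_prod_Times_iff by blast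
      then have "openin (subtopology (prod_topology TT TT) CP) T"
        unfolding T_def by (rule openin_subtopology_Int2)
      moreover have "p \<in> T" unfolding T_def ab using pCP U1(2) U2(2) by simp
      moreover have "T \<subseteq> {p \<in> CP. (\<lambda>(a, b). GH_mult G a b) p \<in> W}"
      proof
        fix q assume q: "q \<in> T"
        obtain a' b' where ab': "q = (a', b')" by (cases q)
        have qCP: "q \<in> CP" and a'U: "a' \<in> U1" and b'U: "b' \<in> U2" using q unfolding ab' T_def by simp_all
        then have c': "GH_s G Q H a' = GH_r G b'" using qCP unfolding ab' CP by simp
        obtain x' where x': "x' \<in> U0" "x' N1 = x N1" "a' = arr G x' g1"
          using basic_elems a'U U1_def by blast
        obtain y' where y': "y' \<in> U0" "y' N2 = y N2" "b' = arr G y' g2"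
          using basic_elems b'U U2_def by blast
        have y'e: "y' = uact G Q H g1 x'" using composable[OF x'(1) xg(2) y'(1) yh(2)] c' x' y' by simp
        have "GH_mult G a' b' = arr G x' (g2 \<otimes> g1)" unfolding x' y' y'e by (rule mult_arr[OF x'(1) xg(2) yh(2)])
        moreover have "x' M = x M" using GH0_down[OF x'(1) xg(1) x'(2)] N1_def by simp
        ultimately have "GH_mult G a' b' \<in> W" using M x'(1) by simp
        then show "q \<in> {p \<in> CP. (\<lambda>(a, b). GH_mult G a b) p \<in> W}" using qCP ab' by simp
      qed
      ultimately show "\<exists>T. openin (subtopology (prod_topology TT TT) CP) T \<and> p \<in> T \<and>
          T \<subseteq> {p \<in> CP. (\<lambda>(a, b). GH_mult G a b) p \<in> W}" by blast
    qed
  qed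
  then show ?thesis unfolding CP_def .
qed

theorem main:
  "topspace TT = A
    \<and> is_topological_groupoid TT UU (GH_r G) (GH_s G Q H) (GH_mult G) (GH_inv G Q H)
    \<and> is_ample TT UU (GH_r G)
    \<and> is_minimal_groupoid TT UU (GH_r G) (GH_s G Q H)
    \<and> Hausdorff_space TT
    \<and> is_etale TT (GH_r G)
    \<and> (subtopology TT UU) homeomorphic_space (subtopology ST Z)"
  unfolding is_topological_groupoid_def is_ample_def topspace_TT
  using groupoid mult_cont[unfolded topspace_TT] inv_cont etale tdisc minimal hausdorff homeo
  by simp

end

theorem proposition3p1:
  fixes G :: "('g, 'b) monoid_scheme" and Q :: "'g set" and Z :: "'g set set" and H :: "'g set"
  assumes "group G"
    and "finite Q" and "Q \<subseteq> carrier G" and "\<forall>q\<in>Q. inv\<^bsub>G\<^esub> q \<in> Q"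
    and "generate G Q = carrier G"
    and "is_URS G Z" and "H \<in> Z"
  shows "topspace (GH_topology G Q H) = GH_arrows G Q H
    \<and> is_topological_groupoid (GH_topology G Q H) (GH_units G Q H)
         (GH_r G) (GH_s G Q H) (GH_mult G) (GH_inv G Q H)
    \<and> is_ample (GH_topology G Q H) (GH_units G Q H) (GH_r G)
    \<and> is_minimal_groupoid (GH_topology G Q H) (GH_units G Q H) (GH_r G) (GH_s G Q H)
    \<and> Hausdorff_space (GH_topology G Q H)
    \<and> is_etale (GH_topology G Q H) (GH_r G)
    \<and> (subtopology (GH_topology G Q H) (GH_units G Q H)) homeomorphic_space
        (subtopology (Sub_topology G) Z)"
proof -
  interpret GHL G Q Z H
    unfolding GHL_def GHL_axioms_def using assms by blast
  show ?thesis by (rule main)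
qed

end
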